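(* Let $\lambda$ be a partition and $T\in\mathsf{HVT}(\lambda)$. Then the multiset uncrowding map $\tilde{\mathcal U}(T)=(\tilde P(T),\tilde Q(T))$ is well-defined: $\tilde P(T)$ is a multiset-valued tableau of some shape $\mu\supseteq\lambda$ and $\tilde Q(T)$ is a flagged increasing tableau of shape $\mu/\lambda$.
   Context: French notation: row $1$ is the bottom row, rows numbered upward, columns left to right; cell $(r,c)$ is in row $r$, column $c$. A semistandard tableau of hook shape consists of a hook entry $x$, a leg $\ell_1<\dots<\ell_p$ above $x$ with $x<\ell_1$, and an arm $a_1\le\dots\le a_q$ to the right of $x$ with $x\le a_1$ ($p,q\ge0$, positive integers). A (semistandard) hook-valued tableau (HVT) of partition shape $\lambda$ is a filling of the cells of $\lambda$ by such hook tableaux with $\max(A)\le\min(B)$ whenever the cell of $A$ is left of that of $B$ in the same row, and $\max(A)<\min(C)$ whenever the cell of $A$ is below that of $C$ in the same column. $\mathsf L_T(r,c),\mathsf A_T(r,c)$ denote leg and arm of cell $(r,c)$. Leg excess = total number of leg entries; a multiset-valued tableau is an HVT of leg excess $0$. A flagged increasing tableau of shape $\mu/\lambda$ ($\lambda\subseteq\mu$ partitions with $\lambda_1=\mu_1$) is a filling of $\mu/\lambda$ by positive integers strictly increasing along rows and columns such that every entry in row $i$ is at most $i-1$. Multiset uncrowding bumping $\tilde{\mathcal V}_b$: if the leg excess of $T$ is $0$, return $T$. Otherwise let $r$ be the topmost row containing a cell with nonempty leg; in that row let $(r,c)$ be the cell whose leg contains the largest value (the rightmost such cell); let $\ell$ be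 its largest leg entry and $a$ its rightmost arm entry. In row $r+1$ find the leftmost number strictly greater than $\ell$. If none exists, attach an empty cell at the end of row $r+1$, call it $(r+1,\tilde c)$, and let $k$ be empty; otherwise let $k$ be this number and $(r+1,\tilde c)$ its cell. (a) If $\tilde c\ne c$: remove $\ell$ from $\mathsf L_T(r,c)$, put $\ell$ in place of $k$ (as hook entry if the cell is new), and attach $k$ (if nonempty) to the leg of $(r+1,\tilde c)$. (b) If $\tilde c=c$: remove the multiset $\{z\in\mathsf A_T(r,c):\ell\le z\le a\}$ from $\mathsf A_T(r,c)$ and $\ell$ from $\mathsf L_T(r,c)$, insert that multiset into $\mathsf A_T(r+1,\tilde c)$, replace the hook entry of $(r+1,\tilde c)$ by $\ell$, and attach $k$ (if nonempty) to $\mathsf L_T(r+1,\tilde c)$. Multiset uncrowding insertion: $\tilde{\mathcal V}(T)=\tilde{\mathcal V}_b^d(T)$, $d\ge1$ minimal such that the shape changes or $\tilde{\mathcal V}_b^d(T)=\tilde{\mathcal V}_b^{d-1}(T)$. Multiset uncrowding map: for $T$ with leg excess $\alpha$, $\tilde P_0=T$, $\tilde Q_0$ empty of shape $\lambda/\lambda$; for $1\le i\le\alpha$, $\tilde P_i=\tilde{\mathcal V}(\tilde P_{i-1})$, and $\tilde Q_i$ is $\tilde Q_{i-1}$ with the new cell $\mathsf{shape}(\tilde P_i)/\mathsf{shape}(\tilde P_{i-1})$ added and filled with $\tilde r-r$, where $\tilde r$ is the row of the new cell and $r$ the topmost row of $\tilde P_{i-1}$ containing a cell with nonzero leg excess;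 $\tilde{\mathcal U}(T)=(\tilde P(T),\tilde Q(T)):=(\tilde P_\alpha,\tilde Q_\alpha)$. *)

theory Defs
  imports Main
begin

(* Conventions (French notation).  A tableau is a list of rows; the list
   element with index i (0-based) is row i+1 (row 1 = bottom row).  User-facing accessors use
   1-based row/column indices (r,c) as in the paper. *)

type_synonym hook = "nat \<times> nat list \<times> nat list"

definition hentry :: "hook \<Rightarrow> nat" where "hentry h = fst h"
definition hleg :: "hook \<Rightarrow> nat list" where "hleg h = fst (snd h)"
definition harm :: "hook \<Rightarrow> nat list" where "harm h = snd (snd h)"

definition hook_entries :: "hook \<Rightarrow> nat list" where
  "hook_entries h = hentry h # hleg h @ harm h"

definition hmin :: "hook \<Rightarrow> nat" where "hmin h = Min (set (hook_entries h))"
definition hmax :: "hook \<Rightarrow> nat" where "hmax h = Max (set (hook_entries h))"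

definition valid_hook :: "hook \<Rightarrow> bool" where
  "valid_hook h \<longleftrightarrow> 0 < hentry h \<and> sorted_wrt (<) (hentry h # hleg h)
      \<and> sorted (hentry h # harm h)"

type_synonym tab = "hook list list"

definition shape :: "tab \<Rightarrow> nat list" where "shape T = map length T"

definition is_partition :: "nat list \<Rightarrow> bool" where
  "is_partition p \<longleftrightarrow> sorted_wrt (\<ge>) p \<and> 0 \<notin> set p"

definition part_cells :: "nat list \<Rightarrow> (nat \<times> nat) set" where
  "part_cells p = {(r,c). 1 \<le> r \<and> r \<le> length p \<and> 1 \<le> c \<and> c \<le> p ! (r - 1)}"

definition cells :: "tab \<Rightarrow> (nat \<times> nat) set" where
  "cells T = part_cells (shape T)"

definition cell :: "tab \<Rightarrow> nat \<Rightarrow> nat \<Rightarrow> hook" where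
  "cell T r c = T ! (r - 1) ! (c - 1)"

definition is_HVT :: "tab \<Rightarrow> bool" where
  "is_HVT T \<longleftrightarrow> is_partition (shape T)
     \<and> (\<forall>(r,c)\<in>cells T. valid_hook (cell T r c))
     \<and> (\<forall>r c c'. (r,c) \<in> cells T \<longrightarrow> (r,c') \<in> cells T \<longrightarrow> c < c'
            \<longrightarrow> hmax (cell T r c) \<le> hmin (cell T r c'))
     \<and> (\<forall>r r' c. (r,c) \<in> cells T \<longrightarrow> (r',c) \<in> cells T \<longrightarrow> r < r'
            \<longrightarrow> hmax (cell T r c) < hmin (cell T r' c))"

definition leg_excess :: "tab \<Rightarrow> nat" where
  "leg_excess T = sum_list (map (\<lambda>row. sum_list (map (\<lambda>h. length (hleg h)) row)) T)"

definition is_MVT :: "tab \<Rightarrow> bool" where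
  "is_MVT T \<longleftrightarrow> is_HVT T \<and> leg_excess T = 0"

definition first_part :: "nat list \<Rightarrow> nat" where
  "first_part p = (case p of [] \<Rightarrow> 0 | x # _ \<Rightarrow> x)"

definition flagged_increasing :: "(nat \<Rightarrow> nat \<Rightarrow> nat) \<Rightarrow> nat list \<Rightarrow> nat list \<Rightarrow> bool" where
  "flagged_increasing Q la mu \<longleftrightarrow>
     is_partition la \<and> is_partition mu \<and> part_cells la \<subseteq> part_cells mu
     \<and> first_part la = first_part mu
     \<and> (\<forall>(r,c) \<in> part_cells mu - part_cells la. 0 < Q r c \<and> Q r c \<le> r - 1)
     \<and> (\<forall>r c c'. (r,c) \<in> part_cells mu - part_cells la \<longrightarrow> (r,c') \<in> part_cells mu - part_cells la
            \<longrightarrow> c < c' \<longrightarrow> Q r c < Q r c')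
     \<and> (\<forall>r r' c. (r,c) \<in> part_cells mu - part_cells la \<longrightarrow> (r',c) \<in> part_cells mu - part_cells la
            \<longrightarrow> r < r' \<longrightarrow> Q r c < Q r' c)"

definition top_leg_row :: "tab \<Rightarrow> nat" where
  "top_leg_row T = Max {r. 1 \<le> r \<and> r \<le> length T \<and> (\<exists>h\<in>set (T ! (r - 1)). hleg h \<noteq> [])}"

definition get_row :: "tab \<Rightarrow> nat \<Rightarrow> hook list" where
  "get_row T r = (if 1 \<le> r \<and> r \<le> length T then T ! (r - 1) else [])"

definition set_row :: "tab \<Rightarrow> nat \<Rightarrow> hook list \<Rightarrow> tab" where
  "set_row T r R = (if r \<le> length T then T[r - 1 := R] else T @ [R])"

definition replace_entry :: "hook \<Rightarrow> nat \<Rightarrow> nat \<Rightarrow> hook" where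
  "replace_entry h k l =
     (if hentry h = k then (l, hleg h, harm h)
      else if k \<in> set (hleg h) then (hentry h, map (\<lambda>z. if z = k then l else z) (hleg h), harm h)
      else (hentry h, hleg h, insort l (remove1 k (harm h))))"

definition add_to_leg :: "hook \<Rightarrow> nat \<Rightarrow> hook" where
  "add_to_leg h k = (hentry h, insort k (hleg h), harm h)"

definition bump :: "tab \<Rightarrow> tab" where
  "bump T =
    (let r = top_leg_row T;
         R = get_row T r;
         m = Max {Max (set (hleg h)) | h. h \<in> set R \<and> hleg h \<noteq> []};
         c = Max {j. 1 \<le> j \<and> j \<le> length R \<and> hleg (R ! (j - 1)) \<noteq> []
                     \<and> Max (set (hleg (R ! (j - 1)))) = m};
         h = R ! (c - 1);
         l = Max (set (hleg h));
         a = last (harm h);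
         R1 = get_row T (r + 1);
         J = {j. 1 \<le> j \<and> j \<le> length R1 \<and> (\<exists>z\<in>set (hook_entries (R1 ! (j - 1))). l < z)};
         isnew = (J = {});
         ct = (if isnew then length R1 + 1 else Min J);
         k = (if isnew then 0 else Min {z \<in> set (hook_entries (R1 ! (ct - 1))). l < z})
     in if ct \<noteq> c then
          (let hr = (hentry h, remove1 l (hleg h), harm h);
               hn = (if isnew then (l, [], []) else add_to_leg (replace_entry (R1 ! (ct - 1)) k l) k);
               R1' = (if isnew then R1 @ [hn] else R1[ct - 1 := hn])
           in set_row (set_row T r (R[c - 1 := hr])) (r + 1) R1')
        else
          (let M = filter (\<lambda>z. l \<le> z \<and> z \<le> a) (harm h);
               hr = (hentry h, remove1 l (hleg h), filter (\<lambda>z. \<not> (l \<le> z \<and> z \<le> a)) (harm h));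
               hn = (if isnew then (l, [], sort M)
                     else (l, insort k (hleg (R1 ! (ct - 1))), sort (harm (R1 ! (ct - 1)) @ M)));
               R1' = (if isnew then R1 @ [hn] else R1[ct - 1 := hn])
           in set_row (set_row T r (R[c - 1 := hr])) (r + 1) R1'))"

definition Vb :: "tab \<Rightarrow> tab" where
  "Vb T = (if leg_excess T = 0 then T else bump T)"

definition V_stop :: "tab \<Rightarrow> nat \<Rightarrow> bool" where
  "V_stop T d \<longleftrightarrow> shape ((Vb ^^ d) T) \<noteq> shape T \<or> (Vb ^^ d) T = (Vb ^^ (d - 1)) T"

definition V :: "tab \<Rightarrow> tab" where
  "V T = (Vb ^^ (LEAST d. 1 \<le> d \<and> V_stop T d)) T"

fun uc :: "tab \<Rightarrow> nat \<Rightarrow> tab \<times> (nat \<Rightarrow> nat \<Rightarrow> nat)" where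
  "uc T 0 = (T, (\<lambda>_ _. 0))"
| "uc T (Suc i) =
     (let P = fst (uc T i); Q = snd (uc T i); P' = V P; r = top_leg_row P
      in (P', (\<lambda>r' c'. if (r', c') \<in> cells P' - cells P then r' - r else Q r' c')))"

definition UP :: "tab \<Rightarrow> tab" where "UP T = fst (uc T (leg_excess T))"
definition UQ :: "tab \<Rightarrow> nat \<Rightarrow> nat \<Rightarrow> nat" where "UQ T = snd (uc T (leg_excess T))"

end

theory Submission
  imports Defs
begin


abbreviation ents :: "hook \<Rightarrow> nat set" where "ents h \<equiv> set (hook_entries h)"

lemma ents_eq: "ents h = insert (hentry h) (set (hleg h) \<union> set (harm h))"
  by (auto simp: hook_entries_def)

lemma hentry_in: "hentry h \<in> ents h" by (simp add: ents_eq)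

lemma hmax_le_iff: "hmax h \<le> b \<longleftrightarrow> (\<forall>z\<in>ents h. z \<le> b)"
  unfolding hmax_def by (subst Max_le_iff) (auto simp: hook_entries_def)

lemma hmin_ge_iff: "b \<le> hmin h \<longleftrightarrow> (\<forall>z\<in>ents h. b \<le> z)"
  unfolding hmin_def by (subst Min_ge_iff) (auto simp: hook_entries_def)

lemma le_hmax: "z \<in> ents h \<Longrightarrow> z \<le> hmax h"
  using hmax_le_iff by blast

lemma hmin_le: "z \<in> ents h \<Longrightarrow> hmin h \<le> z"
  using hmin_ge_iff by blast

lemma hmin_le_hmax: "hmin h \<le> hmax h"
  using hmin_le le_hmax hentry_in order_trans by blast

lemma hmax_lt_iff: "hmax h < b \<longleftrightarrow> (\<forall>z\<in>ents h. z < b)"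
  unfolding hmax_def by (subst Max_less_iff) (auto simp: hook_entries_def)

lemma hmin_gt_iff: "b < hmin h \<longleftrightarrow> (\<forall>z\<in>ents h. b < z)"
  unfolding hmin_def by (subst Min_gr_iff) (auto simp: hook_entries_def)

lemma valid_hookD:
  assumes "valid_hook h"
  shows "0 < hentry h" "\<And>y. y \<in> set (hleg h) \<Longrightarrow> hentry h < y"
    "\<And>y. y \<in> set (harm h) \<Longrightarrow> hentry h \<le> y"
    "sorted_wrt (<) (hleg h)" "sorted (harm h)"
  using assms by (auto simp: valid_hook_def)

lemma valid_hookI:
  assumes "0 < hentry h" "\<And>y. y \<in> set (hleg h) \<Longrightarrow> hentry h < y"
    "\<And>y. y \<in> set (harm h) \<Longrightarrow> hentry h \<le> y"
    "sorted_wrt (<) (hleg h)" "sorted (harm h)"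
  shows "valid_hook h"
  using assms by (auto simp: valid_hook_def)

lemma hmin_valid: assumes "valid_hook h" shows "hmin h = hentry h"
proof (rule antisym)
  show "hmin h \<le> hentry h" by (rule hmin_le[OF hentry_in])
  show "hentry h \<le> hmin h" unfolding hmin_ge_iff ents_eq
    using valid_hookD(2,3)[OF assms] by (auto intro: less_imp_le)
qed

lemma hook_sel[simp]: "hentry (x, L, A) = x" "hleg (x, L, A) = L" "harm (x, L, A) = A"
  by (simp_all add: hentry_def hleg_def harm_def)

lemma ents_triple: "ents (x, L, A) = insert x (set L \<union> set A)"
  by (simp add: ents_eq)

lemma in_cells: "(r,c) \<in> cells T \<longleftrightarrow> 1 \<le> r \<and> r \<le> length T \<and> 1 \<le> c \<and> c \<le> length (T!(r-1))"
  by (auto simp: cells_def part_cells_def shape_def)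

lemma shape_len: "length (shape T) = length T" by (simp add: shape_def)
lemma shape_nth: "i < length T \<Longrightarrow> shape T ! i = length (T ! i)" by (simp add: shape_def)

lemma is_partitionD:
  assumes "is_partition p" "i < j" "j < length p"
  shows "p ! j \<le> p ! i"
  using assms unfolding is_partition_def by (simp add: sorted_wrt_iff_nth_less)

lemma is_partition_pos:
  assumes "is_partition p" "i < length p" shows "0 < p ! i"
  using assms unfolding is_partition_def by (metis gr0I nth_mem)

lemma HVT_partition: "is_HVT T \<Longrightarrow> is_partition (shape T)" by (simp add: is_HVT_def)

lemma HVT_valid: "is_HVT T \<Longrightarrow> (r,c) \<in> cells T \<Longrightarrow> valid_hook (cell T r c)"
  by (auto simp: is_HVT_def)

lemma HVT_row: "is_HVT T \<Longrightarrow> (r,c) \<in> cells T \<Longrightarrow> (r,c') \<in> cells T \<Longrightarrow> c < c'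
   \<Longrightarrow> hmax (cell T r c) \<le> hmin (cell T r c')"
  by (auto simp: is_HVT_def)

lemma HVT_col: "is_HVT T \<Longrightarrow> (r,c) \<in> cells T \<Longrightarrow> (r',c) \<in> cells T \<Longrightarrow> r < r'
   \<Longrightarrow> hmax (cell T r c) < hmin (cell T r' c)"
  by (auto simp: is_HVT_def)

lemma HVT_row_ents: "is_HVT T \<Longrightarrow> (r,c) \<in> cells T \<Longrightarrow> (r,c') \<in> cells T \<Longrightarrow> c < c'
   \<Longrightarrow> z \<in> ents (cell T r c) \<Longrightarrow> z' \<in> ents (cell T r c') \<Longrightarrow> z \<le> z'"
  by (meson HVT_row hmin_le le_hmax order_trans)

lemma HVT_col_ents: "is_HVT T \<Longrightarrow> (r,c) \<in> cells T \<Longrightarrow> (r',c) \<in> cells T \<Longrightarrow> r < r'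
   \<Longrightarrow> z \<in> ents (cell T r c) \<Longrightarrow> z' \<in> ents (cell T r' c) \<Longrightarrow> z < z'"
  by (meson HVT_col hmin_le le_hmax le_less_trans less_le_trans)

lemma cells_col_down:
  assumes "is_partition (shape T)" "(r',c) \<in> cells T" "1 \<le> r" "r \<le> r'"
  shows "(r,c) \<in> cells T"
proof -
  have "length (T!(r'-1)) \<le> length (T!(r-1))"
  proof (cases "r = r'")
    case False
    then show ?thesis using is_partitionD[OF assms(1), of "r-1" "r'-1"] assms
      by (auto simp: in_cells shape_len shape_nth)
  qed simp
  then show ?thesis using assms by (auto simp: in_cells)
qed

lemma cells_row_left:
  assumes "(r,c') \<in> cells T" "1 \<le> c" "c \<le> c'"
  shows "(r,c) \<in> cells T"
  using assms by (auto simp: in_cells)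

definition upd :: "tab \<Rightarrow> nat \<Rightarrow> nat \<Rightarrow> hook \<Rightarrow> tab" where
  "upd T r c g = T[r-1 := (T!(r-1))[c-1 := g]]"

lemma length_upd[simp]: "length (upd T r c g) = length T" by (simp add: upd_def)

lemma upd_nth: "i < length T \<Longrightarrow> upd T r c g ! i = (if i = r - 1 then (T!i)[c-1 := g] else T ! i)"
  by (simp add: upd_def)

lemma shape_upd[simp]: "shape (upd T r c g) = shape T"
  unfolding shape_def upd_def
  by (rule nth_equalityI) (auto simp: nth_list_update intro: list_update_beyond split: if_splits,
     metis length_list_update list_update_beyond not_le nth_list_update_eq nth_list_update_neq)

lemma cells_upd[simp]: "cells (upd T r c g) = cells T" by (simp add: cells_def)

lemma cell_upd:
  assumes "(r,c) \<in> cells T" "(r',c') \<in> cells T"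
  shows "cell (upd T r c g) r' c' = (if r' = r \<and> c' = c then g else cell T r' c')"
  using assms by (auto simp: cell_def upd_def in_cells nth_list_update)

lemma HVT_upd:
  assumes H: "is_HVT T" and rc: "(r,c) \<in> cells T" and v: "valid_hook g"
    and L: "\<And>c'. (r,c') \<in> cells T \<Longrightarrow> c' < c \<Longrightarrow> hmax (cell T r c') \<le> hmin g"
    and R: "\<And>c'. (r,c') \<in> cells T \<Longrightarrow> c < c' \<Longrightarrow> hmax g \<le> hmin (cell T r c')"
    and D: "\<And>r'. (r',c) \<in> cells T \<Longrightarrow> r' < r \<Longrightarrow> hmax (cell T r' c) < hmin g"
    and U: "\<And>r'. (r',c) \<in> cells T \<Longrightarrow> r < r' \<Longrightarrow> hmax g < hmin (cell T r' c)"
  shows "is_HVT (upd T r c g)"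
  unfolding is_HVT_def
proof (intro conjI allI impI ballI)
  show "is_partition (shape (upd T r c g))" using H by (simp add: is_HVT_def)
next
  fix x assume "x \<in> cells (upd T r c g)"
  then obtain a b where x: "x = (a,b)" "(a,b) \<in> cells T" by (cases x) auto
  show "case x of (r', c') \<Rightarrow> valid_hook (cell (upd T r c g) r' c')"
    using HVT_valid[OF H x(2)] v rc x by (simp add: cell_upd)
next
  fix a b b' assume 1: "(a,b) \<in> cells (upd T r c g)" and 2: "(a,b') \<in> cells (upd T r c g)" and "b < b'"
  then have 1: "(a,b) \<in> cells T" and 2: "(a,b') \<in> cells T" by auto
  show "hmax (cell (upd T r c g) a b) \<le> hmin (cell (upd T r c g) a b')"
    unfolding cell_upd[OF rc 1] cell_upd[OF rc 2]
    using HVT_row[OF H 1 2 \<open>b < b'\<close>] L[of b] R[of b'] 1 2 \<open>b < b'\<close> by auto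
next
  fix a a' b assume 1: "(a,b) \<in> cells (upd T r c g)" and 2: "(a',b) \<in> cells (upd T r c g)" and "a < a'"
  then have 1: "(a,b) \<in> cells T" and 2: "(a',b) \<in> cells T" by auto
  show "hmax (cell (upd T r c g) a b) < hmin (cell (upd T r c g) a' b)"
    unfolding cell_upd[OF rc 1] cell_upd[OF rc 2]
    using HVT_col[OF H 1 2 \<open>a < a'\<close>] D[of a] U[of a'] 1 2 \<open>a < a'\<close> by auto
qed


definition app :: "tab \<Rightarrow> nat \<Rightarrow> hook \<Rightarrow> tab" where
  "app T r g = set_row T r (get_row T r @ [g])"

lemma get_row_len: "1 \<le> r \<Longrightarrow> r \<le> length T \<Longrightarrow> get_row T r = T ! (r-1)"
  by (simp add: get_row_def)

lemma get_row_out: "\<not> (1 \<le> r \<and> r \<le> length T) \<Longrightarrow> get_row T r = []"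
  unfolding get_row_def by auto

lemma length_app: "1 \<le> r \<Longrightarrow> r \<le> Suc (length T) \<Longrightarrow>
   length (app T r g) = (if r \<le> length T then length T else Suc (length T))"
  by (simp add: app_def set_row_def)

lemma app_nth: "1 \<le> r \<Longrightarrow> r \<le> Suc (length T) \<Longrightarrow> i < length (app T r g) \<Longrightarrow>
   app T r g ! i = (if i = r - 1 then get_row T r @ [g] else T ! i)"
  by (auto simp: app_def set_row_def nth_append get_row_def nth_list_update)

lemma cells_app:
  assumes "1 \<le> r" "r \<le> Suc (length T)"
  shows "cells (app T r g) = insert (r, Suc (length (get_row T r))) (cells T)"
proof -
  have "(a,b) \<in> cells (app T r g) \<longleftrightarrow> (a,b) \<in> insert (r, Suc (length (get_row T r))) (cells T)" for a b
  proof (cases "a = r")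
    case True
    then show ?thesis using assms
      by (auto simp: in_cells length_app app_nth get_row_def)
  next
    case False
    then show ?thesis using assms
      by (auto simp: in_cells length_app app_nth split: if_splits)
  qed
  then show ?thesis by auto
qed

lemma cell_app:
  assumes "1 \<le> r" "r \<le> Suc (length T)" "(a,b) \<in> cells (app T r g)"
  shows "cell (app T r g) a b = (if a = r \<and> b = Suc (length (get_row T r)) then g else cell T a b)"
proof -
  have a: "a - 1 < length (app T r g)" "1 \<le> a" "1 \<le> b" using assms(3) by (auto simp: in_cells)
  show ?thesis
  proof (cases "a = r")
    case True
    then show ?thesis using assms a
      by (auto simp: cell_def app_nth nth_append get_row_def in_cells cells_app)
  next
    case False
    then have "a - 1 \<noteq> r - 1" using a assms by auto
    then show ?thesis using assms a False by (auto simp: cell_def app_nth)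
  qed
qed

lemma shape_app:
  assumes "1 \<le> r" "r \<le> Suc (length T)"
  shows "shape (app T r g) = (if r \<le> length T then (shape T)[r-1 := Suc (shape T ! (r-1))]
                             else shape T @ [1])"
  using assms
  by (auto simp: shape_def app_def set_row_def get_row_def map_update)

lemma partition_app:
  assumes P: "is_partition (shape T)" and r: "2 \<le> r" "r \<le> Suc (length T)"
    and lt: "length (get_row T r) < length (T ! (r-2))"
  shows "is_partition (shape (app T r g))"
proof (cases "r \<le> length T")
  case True
  let ?p = "shape T"
  have len: "length ?p = length T" by (simp add: shape_len)
  have ltp: "?p ! (r-1) < ?p ! (r-2)" using lt True r by (simp add: shape_nth get_row_def)
  have "sorted_wrt (\<ge>) (?p[r-1 := Suc (?p ! (r-1))])"
    unfolding sorted_wrt_iff_nth_less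
  proof (intro allI impI)
    fix i j assume ij: "i < j" "j < length (?p[r-1 := Suc (?p ! (r-1))])"
    then have j: "j < length ?p" by simp
    show "?p[r-1 := Suc (?p ! (r-1))] ! j \<le> ?p[r-1 := Suc (?p ! (r-1))] ! i"
    proof -
      have m: "\<And>a b. a < b \<Longrightarrow> b < length ?p \<Longrightarrow> ?p ! b \<le> ?p ! a"
        using is_partitionD[OF P] by blast
      consider "i = r - 1" | "j = r - 1" | "i \<noteq> r - 1" "j \<noteq> r - 1" by blast
      then show ?thesis
      proof cases
        case 1 then show ?thesis using ij j m[of i j] by (simp add: nth_list_update)
      next
        case 2
        then have i2: "i \<le> r - 2" using ij r by auto
        have "?p ! (r-2) \<le> ?p ! i"
        proof (cases "i = r - 2")
          case False
          then have "i < r - 2" using i2 by simp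
          moreover have "r - 2 < length ?p" using j 2 r by simp
          ultimately show ?thesis using m by blast
        qed simp
        moreover have "i \<noteq> j" using ij by simp
        ultimately show ?thesis using 2 ltp j by (simp add: nth_list_update)
      next
        case 3 then show ?thesis using ij j m[of i j] by (simp add: nth_list_update)
      qed
    qed
  qed
  moreover have "0 \<notin> set (?p[r-1 := Suc (?p ! (r-1))])"
    using P set_update_subset_insert[of ?p "r-1" "Suc (?p!(r-1))"] unfolding is_partition_def
    by auto
  ultimately show ?thesis using True r by (simp add: shape_app is_partition_def)
next
  case False
  have "shape (app T r g) = shape T @ [1]" using shape_app[of r T g] r False by simp
  then show ?thesis using P
    by (auto simp: is_partition_def sorted_wrt_append Suc_le_eq) (metis gr0I)
qed

lemma HVT_app:
  assumes H: "is_HVT T" and r: "2 \<le> r" "r \<le> Suc (length T)"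
    and lt: "length (get_row T r) < length (T ! (r-2))"
    and v: "valid_hook g"
    and L: "\<And>c'. (r,c') \<in> cells T \<Longrightarrow> hmax (cell T r c') \<le> hmin g"
    and D: "\<And>r'. (r', Suc (length (get_row T r))) \<in> cells T \<Longrightarrow> r' < r
              \<Longrightarrow> hmax (cell T r' (Suc (length (get_row T r)))) < hmin g"
  shows "is_HVT (app T r g)"
proof -
  let ?n = "Suc (length (get_row T r))"
  have r1: "1 \<le> r" using r by simp
  have P: "is_partition (shape T)" using H by (simp add: is_HVT_def)
  have notT: "(r, ?n) \<notin> cells T" by (auto simp: in_cells get_row_def)
  have noabove: "(a, ?n) \<notin> cells T" if "r < a" for a
  proof
    assume a: "(a, ?n) \<in> cells T"
    then have "(r, ?n) \<in> cells T" using cells_col_down[OF P a, of r] that r by simp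
    with notT show False by simp
  qed
  have C: "cells (app T r g) = insert (r, ?n) (cells T)" using cells_app[OF r1 r(2)] .
  have cellA: "\<And>a b. (a,b) \<in> cells (app T r g) \<Longrightarrow>
      cell (app T r g) a b = (if a = r \<and> b = ?n then g else cell T a b)"
    using cell_app[OF r1 r(2)] by blast
  show ?thesis unfolding is_HVT_def
  proof (intro conjI allI impI ballI)
    show "is_partition (shape (app T r g))" using partition_app[OF P r lt] .
  next
    fix x assume x: "x \<in> cells (app T r g)"
    then obtain a b where ab: "x = (a,b)" by (cases x)
    show "case x of (r', c') \<Rightarrow> valid_hook (cell (app T r g) r' c')"
      using x ab cellA[of a b] C HVT_valid[OF H, of a b] v by auto
  next
    fix a b b' assume 1: "(a,b) \<in> cells (app T r g)" and 2: "(a,b') \<in> cells (app T r g)" and bb: "b < b'"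
    have nb: "\<not> (a = r \<and> b = ?n)"
    proof
      assume "a = r \<and> b = ?n"
      with 2 bb C show False by (auto simp: in_cells get_row_def)
    qed
    show "hmax (cell (app T r g) a b) \<le> hmin (cell (app T r g) a b')"
    proof (cases "a = r \<and> b' = ?n")
      case True
      then show ?thesis using cellA[OF 1] cellA[OF 2] nb 1 C L[of b] by auto
    next
      case False
      then show ?thesis using cellA[OF 1] cellA[OF 2] nb 1 2 C HVT_row[OF H _ _ bb] by auto
    qed
  next
    fix a a' b assume 1: "(a,b) \<in> cells (app T r g)" and 2: "(a',b) \<in> cells (app T r g)" and aa: "a < a'"
    have nb: "\<not> (a = r \<and> b = ?n)"
    proof
      assume "a = r \<and> b = ?n"
      with 2 aa C noabove show False by auto
    qed
    show "hmax (cell (app T r g) a b) < hmin (cell (app T r g) a' b)"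
    proof (cases "a' = r \<and> b = ?n")
      case True
      then show ?thesis using cellA[OF 1] cellA[OF 2] nb 1 C D[of a] aa by auto
    next
      case False
      then show ?thesis using cellA[OF 1] cellA[OF 2] nb 1 2 C HVT_col[OF H _ _ aa] by auto
    qed
  qed
qed


definition rowcnt :: "hook list \<Rightarrow> nat" where
  "rowcnt row = sum_list (map (\<lambda>h. length (hleg h)) row)"
definition cnt :: "tab \<Rightarrow> nat \<Rightarrow> nat" where "cnt T t = rowcnt (get_row T t)"
definition rowvals :: "tab \<Rightarrow> nat \<Rightarrow> nat set" where
  "rowvals T t = (\<Union>h\<in>set (get_row T t). ents h)"
definition rowlegs :: "tab \<Rightarrow> nat \<Rightarrow> nat set" where
  "rowlegs T t = (\<Union>h\<in>set (get_row T t). set (hleg h))"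

lemma leg_excess_rowcnt: "leg_excess T = sum_list (map rowcnt T)"
  unfolding leg_excess_def rowcnt_def[abs_def] ..

lemma rowcnt_0_iff: "rowcnt row = 0 \<longleftrightarrow> (\<forall>h\<in>set row. hleg h = [])"
  by (auto simp: rowcnt_def sum_list_eq_0_iff)

lemma cnt_pos_iff: "0 < cnt T t \<longleftrightarrow> (\<exists>h\<in>set (get_row T t). hleg h \<noteq> [])"
  by (metis cnt_def gr0I rowcnt_0_iff neq0_conv)

lemma cnt_out: "\<not> (1 \<le> t \<and> t \<le> length T) \<Longrightarrow> cnt T t = 0"
  by (simp add: cnt_def get_row_out rowcnt_def)

lemma excess_pos_row:
  assumes "0 < leg_excess T"
  shows "\<exists>t. 1 \<le> t \<and> t \<le> length T \<and> 0 < cnt T t"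
proof (rule ccontr)
  assume A: "\<not> ?thesis"
  have "\<forall>row\<in>set T. rowcnt row = 0"
  proof
    fix row assume "row \<in> set T"
    then obtain i where i: "i < length T" "row = T!i" by (auto simp: in_set_conv_nth)
    moreover have "\<not> (0 < cnt T (Suc i))"
    proof
      assume "0 < cnt T (Suc i)"
      with i have "\<exists>t. 1 \<le> t \<and> t \<le> length T \<and> 0 < cnt T t" by (intro exI[of _ "Suc i"]) auto
      with A show False by blast
    qed
    ultimately show "rowcnt row = 0" by (simp add: cnt_def get_row_def)
  qed
  then have "leg_excess T = 0" unfolding leg_excess_rowcnt by (simp add: sum_list_eq_0_iff)
  with assms show False by simp
qed

definition brow :: "tab \<Rightarrow> nat" where "brow T = top_leg_row T"

lemma top_set_eq: "{r. 1 \<le> r \<and> r \<le> length T \<and> (\<exists>h\<in>set (T ! (r - 1)). hleg h \<noteq> [])}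
   = {t. 1 \<le> t \<and> t \<le> length T \<and> 0 < cnt T t}"
  by (rule Collect_cong) (metis cnt_pos_iff get_row_def)

lemma brow_props:
  assumes "0 < leg_excess T"
  shows "1 \<le> brow T" "brow T \<le> length T" "0 < cnt T (brow T)"
    "\<And>t. brow T < t \<Longrightarrow> cnt T t = 0"
proof -
  let ?S = "{t. 1 \<le> t \<and> t \<le> length T \<and> 0 < cnt T t}"
  have fin: "finite ?S" by (rule finite_subset[of _ "{..length T}"]) auto
  have ne: "?S \<noteq> {}" using excess_pos_row[OF assms] by auto
  have b: "brow T = Max ?S" unfolding brow_def top_leg_row_def top_set_eq ..
  have "brow T \<in> ?S" unfolding b using Max_in[OF fin ne] .
  then show "1 \<le> brow T" "brow T \<le> length T" "0 < cnt T (brow T)" by auto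
  fix t assume t: "brow T < t"
  show "cnt T t = 0"
  proof (rule ccontr)
    assume "cnt T t \<noteq> 0"
    then have "t \<le> length T" using cnt_out[of t T] by fastforce
    with \<open>cnt T t \<noteq> 0\<close> t \<open>1 \<le> brow T\<close> have "t \<in> ?S" by auto
    then have "t \<le> brow T" unfolding b using Max_ge[OF fin] by blast
    with t show False by simp
  qed
qed

lemma brow_eqI:
  assumes "1 \<le> s" "s \<le> length T" "0 < cnt T s" "\<And>t. s < t \<Longrightarrow> cnt T t = 0"
  shows "brow T = s"
proof -
  let ?S = "{t. 1 \<le> t \<and> t \<le> length T \<and> 0 < cnt T t}"
  have fin: "finite ?S" by (rule finite_subset[of _ "{..length T}"]) auto
  have b: "brow T = Max ?S" unfolding brow_def top_leg_row_def top_set_eq ..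
  show ?thesis unfolding b
  proof (rule Max_eqI[OF fin])
    fix y assume "y \<in> ?S"
    then have "0 < cnt T y" by simp
    then show "y \<le> s" using assms(4)[of y] by (metis not_le less_irrefl)
  next
    show "s \<in> ?S" using assms by simp
  qed
qed

definition bR :: "tab \<Rightarrow> hook list" where "bR T = get_row T (brow T)"
definition bm :: "tab \<Rightarrow> nat" where
  "bm T = Max {Max (set (hleg h)) | h. h \<in> set (bR T) \<and> hleg h \<noteq> []}"
definition bc :: "tab \<Rightarrow> nat" where
  "bc T = Max {j. 1 \<le> j \<and> j \<le> length (bR T) \<and> hleg (bR T ! (j - 1)) \<noteq> []
                     \<and> Max (set (hleg (bR T ! (j - 1)))) = bm T}"
definition bh :: "tab \<Rightarrow> hook" where "bh T = bR T ! (bc T - 1)"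
definition bl :: "tab \<Rightarrow> nat" where "bl T = Max (set (hleg (bh T)))"
definition ba :: "tab \<Rightarrow> nat" where "ba T = last (harm (bh T))"
definition bR1 :: "tab \<Rightarrow> hook list" where "bR1 T = get_row T (brow T + 1)"
definition bJ :: "tab \<Rightarrow> nat set" where
  "bJ T = {j. 1 \<le> j \<and> j \<le> length (bR1 T) \<and> (\<exists>z\<in>set (hook_entries (bR1 T ! (j - 1))). bl T < z)}"
definition bct :: "tab \<Rightarrow> nat" where
  "bct T = (if bJ T = {} then length (bR1 T) + 1 else Min (bJ T))"
definition bk :: "tab \<Rightarrow> nat" where
  "bk T = (if bJ T = {} then 0 else Min {z \<in> set (hook_entries (bR1 T ! (bct T - 1))). bl T < z})"
definition bM :: "tab \<Rightarrow> nat list" where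
  "bM T = filter (\<lambda>z. bl T \<le> z \<and> z \<le> ba T) (harm (bh T))"
definition bhr :: "tab \<Rightarrow> hook" where
  "bhr T = (if bct T \<noteq> bc T then (hentry (bh T), remove1 (bl T) (hleg (bh T)), harm (bh T))
            else (hentry (bh T), remove1 (bl T) (hleg (bh T)),
                  filter (\<lambda>z. \<not> (bl T \<le> z \<and> z \<le> ba T)) (harm (bh T))))"
definition bhn :: "tab \<Rightarrow> hook" where
  "bhn T = (if bct T \<noteq> bc T then
              (if bJ T = {} then (bl T, [], [])
               else add_to_leg (replace_entry (bR1 T ! (bct T - 1)) (bk T) (bl T)) (bk T))
            else (if bJ T = {} then (bl T, [], sort (bM T))
                  else (bl T, insort (bk T) (hleg (bR1 T ! (bct T - 1))),
                        sort (harm (bR1 T ! (bct T - 1)) @ bM T))))"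

lemma bump_eq:
  "bump T = set_row (set_row T (brow T) ((bR T)[bc T - 1 := bhr T])) (brow T + 1)
              (if bJ T = {} then bR1 T @ [bhn T] else (bR1 T)[bct T - 1 := bhn T])"
  unfolding bump_def Let_def brow_def[symmetric] bR_def[symmetric] bm_def[symmetric]
    bc_def[symmetric] bh_def[symmetric] bl_def[symmetric] ba_def[symmetric] bR1_def[symmetric]
    bJ_def[symmetric] bct_def[symmetric] bk_def[symmetric] bM_def[symmetric]
  by (simp add: bhr_def bhn_def)


lemma get_row_cells: "(t,j) \<in> cells T \<longleftrightarrow> 1 \<le> j \<and> j \<le> length (get_row T t) \<and> 1 \<le> t"
  by (auto simp: in_cells get_row_def)

lemma get_row_cell: "(t,j) \<in> cells T \<Longrightarrow> cell T t j = get_row T t ! (j - 1)"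
  by (auto simp: in_cells get_row_def cell_def)

lemma in_set_row: "x \<in> set (get_row T t) \<longleftrightarrow> (\<exists>j. (t,j) \<in> cells T \<and> cell T t j = x)"
proof
  assume "x \<in> set (get_row T t)"
  then obtain i where i: "i < length (get_row T t)" "get_row T t ! i = x" by (auto simp: in_set_conv_nth)
  then have "1 \<le> t" by (auto simp: get_row_def split: if_splits)
  then have "(t, Suc i) \<in> cells T" using i by (simp add: get_row_cells)
  then show "\<exists>j. (t,j) \<in> cells T \<and> cell T t j = x" using i get_row_cell by fastforce
next
  assume "\<exists>j. (t,j) \<in> cells T \<and> cell T t j = x"
  then obtain j where j: "(t,j) \<in> cells T" "cell T t j = x" by blast
  have "j - 1 < length (get_row T t)" using j(1) get_row_cells[of t j T] by auto
  then show "x \<in> set (get_row T t)" using get_row_cell[OF j(1)] j(2) nth_mem by metis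
qed

lemma rowvals_iff: "z \<in> rowvals T t \<longleftrightarrow> (\<exists>j. (t,j) \<in> cells T \<and> z \<in> ents (cell T t j))"
  unfolding rowvals_def using in_set_row by fastforce

lemma rowlegs_iff: "z \<in> rowlegs T t \<longleftrightarrow> (\<exists>j. (t,j) \<in> cells T \<and> z \<in> set (hleg (cell T t j)))"
  unfolding rowlegs_def using in_set_row by fastforce

lemma cnt0_legs: "cnt T t = 0 \<Longrightarrow> (t,j) \<in> cells T \<Longrightarrow> hleg (cell T t j) = []"
  unfolding cnt_def rowcnt_0_iff using in_set_row by blast

locale bctx =
  fixes T :: tab
  assumes H: "is_HVT T" and E: "0 < leg_excess T"
begin

abbreviation "r \<equiv> brow T"
abbreviation "R \<equiv> bR T"
abbreviation "c \<equiv> bc T"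
abbreviation "h \<equiv> bh T"
abbreviation "l \<equiv> bl T"
abbreviation "R1 \<equiv> bR1 T"
abbreviation "J \<equiv> bJ T"
abbreviation "ct \<equiv> bct T"
abbreviation "k \<equiv> bk T"

lemma r_ge1: "1 \<le> r" and r_le: "r \<le> length T" and cnt_r: "0 < cnt T r"
  and cnt_above: "\<And>t. r < t \<Longrightarrow> cnt T t = 0"
  using brow_props[OF E] by auto

lemma P: "is_partition (shape T)" using H by (simp add: is_HVT_def)

lemma R_eq: "R = T ! (r - 1)" using r_ge1 r_le by (simp add: bR_def get_row_def)

lemma r_cells: "(r,j) \<in> cells T \<longleftrightarrow> 1 \<le> j \<and> j \<le> length R"
  using r_ge1 by (simp add: get_row_cells bR_def)

lemma r_cell: "1 \<le> j \<Longrightarrow> j \<le> length R \<Longrightarrow> cell T r j = R ! (j - 1)"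
  using r_cells get_row_cell by (simp add: bR_def)

lemma bc_facts:
  shows "1 \<le> c" "c \<le> length R" "hleg h \<noteq> []" "l = bm T"
    "\<And>j. 1 \<le> j \<Longrightarrow> j \<le> length R \<Longrightarrow> hleg (R ! (j-1)) \<noteq> [] \<Longrightarrow> Max (set (hleg (R ! (j-1)))) \<le> bm T"
    "\<And>j. 1 \<le> j \<Longrightarrow> j \<le> length R \<Longrightarrow> hleg (R ! (j-1)) \<noteq> [] \<Longrightarrow> Max (set (hleg (R ! (j-1)))) = bm T \<Longrightarrow> j \<le> c"
proof -
  let ?C = "{Max (set (hleg h)) | h. h \<in> set R \<and> hleg h \<noteq> []}"
  have Ceq: "?C = (\<lambda>h. Max (set (hleg h))) ` {h \<in> set R. hleg h \<noteq> []}" by blast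
  have finC: "finite ?C" unfolding Ceq by simp
  have "\<exists>x\<in>set R. hleg x \<noteq> []" using cnt_r unfolding cnt_pos_iff bR_def .
  then obtain x where x: "x \<in> set R" "hleg x \<noteq> []" by blast
  then have "Max (set (hleg x)) \<in> ?C" by blast
  then have neC: "?C \<noteq> {}" by blast
  have bmC: "bm T \<in> ?C" unfolding bm_def using Max_in[OF finC neC] .
  then obtain h0 where h0: "h0 \<in> set R" "hleg h0 \<noteq> []" "Max (set (hleg h0)) = bm T" by auto
  then obtain j0 where j0: "j0 < length R" "R ! j0 = h0" by (auto simp: in_set_conv_nth)
  let ?Jc = "{j. 1 \<le> j \<and> j \<le> length R \<and> hleg (R ! (j - 1)) \<noteq> [] \<and> Max (set (hleg (R ! (j - 1)))) = bm T}"
  have finJ: "finite ?Jc" by (rule finite_subset[of _ "{..length R}"]) auto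
  have "Suc j0 \<in> ?Jc" using j0 h0 by auto
  then have neJ: "?Jc \<noteq> {}" by blast
  have cJ: "c \<in> ?Jc" unfolding bc_def using Max_in[OF finJ neJ] .
  then show "1 \<le> c" "c \<le> length R" "hleg h \<noteq> []" "l = bm T"
    by (auto simp: bh_def bl_def)
  show "\<And>j. 1 \<le> j \<Longrightarrow> j \<le> length R \<Longrightarrow> hleg (R ! (j-1)) \<noteq> [] \<Longrightarrow> Max (set (hleg (R ! (j-1)))) \<le> bm T"
  proof -
    fix j assume j: "1 \<le> j" "j \<le> length R" "hleg (R ! (j-1)) \<noteq> []"
    then have "R ! (j-1) \<in> set R" by simp
    then have "Max (set (hleg (R ! (j-1)))) \<in> ?C" using j by blast
    then show "Max (set (hleg (R ! (j-1)))) \<le> bm T" unfolding bm_def using Max_ge[OF finC] by blast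
  qed
  show "\<And>j. 1 \<le> j \<Longrightarrow> j \<le> length R \<Longrightarrow> hleg (R ! (j-1)) \<noteq> [] \<Longrightarrow> Max (set (hleg (R ! (j-1)))) = bm T \<Longrightarrow> j \<le> c"
    unfolding bc_def using Max_ge[OF finJ] by blast
qed

lemma c_cell: "(r,c) \<in> cells T" "cell T r c = h"
  using bc_facts(1,2) r_cells r_cell by (auto simp: bh_def)

lemma h_valid: "valid_hook h" using HVT_valid[OF H c_cell(1)] c_cell(2) by simp

lemma l_leg: "l \<in> set (hleg h)"
  using bc_facts(3) by (simp add: bl_def)

lemma l_gt_entry: "hentry h < l" using valid_hookD(2)[OF h_valid l_leg] .

lemma l_ents: "l \<in> ents h" using l_leg by (simp add: ents_eq)

lemma l_pos: "0 < l" using l_gt_entry by simp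

lemma legs_le:
  assumes "(r,j) \<in> cells T" "y \<in> set (hleg (cell T r j))"
  shows "y \<le> l"
proof -
  have j: "1 \<le> j" "j \<le> length R" using assms r_cells by auto
  have ne: "hleg (R ! (j-1)) \<noteq> []" using assms r_cell[OF j] by auto
  have "y \<le> Max (set (hleg (R ! (j-1))))" using assms r_cell[OF j] by simp
  also have "\<dots> \<le> bm T" using bc_facts(5)[OF j ne] .
  finally show ?thesis using bc_facts(4) by simp
qed

lemma legs_lt:
  assumes "(r,j) \<in> cells T" "y \<in> set (hleg (cell T r j))" "j \<noteq> c \<or> y \<noteq> l"
  shows "y < l"
proof (rule ccontr)
  assume "\<not> y < l"
  then have yl: "y = l" using legs_le[OF assms(1,2)] by simp
  have j: "1 \<le> j" "j \<le> length R" using assms r_cells by auto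
  have ne: "hleg (R ! (j-1)) \<noteq> []" using assms r_cell[OF j] by auto
  have "y \<le> Max (set (hleg (R ! (j-1))))" using assms r_cell[OF j] by simp
  moreover have "Max (set (hleg (R ! (j-1)))) \<le> bm T" using bc_facts(5)[OF j ne] .
  ultimately have "Max (set (hleg (R ! (j-1)))) = bm T" using yl bc_facts(4) by simp
  then have "j \<le> c" using bc_facts(6)[OF j ne] by simp
  moreover have "j \<noteq> c" using assms(3) yl by simp
  ultimately have "j < c" by simp
  then have "y \<le> hmin h"
    using HVT_row[OF H assms(1) c_cell(1)] c_cell(2) le_hmax[of y "cell T r j"] assms(2)
    by (simp add: ents_eq)
  then have "y \<le> hentry h" using hmin_valid[OF h_valid] by simp
  with l_gt_entry yl show False by simp
qed

lemma R1_cells: "(Suc r, j) \<in> cells T \<longleftrightarrow> 1 \<le> j \<and> j \<le> length R1"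
  by (simp add: get_row_cells bR1_def)

lemma R1_cell: "1 \<le> j \<Longrightarrow> j \<le> length R1 \<Longrightarrow> cell T (Suc r) j = R1 ! (j - 1)"
  using R1_cells get_row_cell by (simp add: bR1_def)

lemma R1_legs: "(Suc r, j) \<in> cells T \<Longrightarrow> hleg (cell T (Suc r) j) = []"
  using cnt0_legs cnt_above[of "Suc r"] by simp

lemma R1_ne_len: "R1 \<noteq> [] \<Longrightarrow> Suc r \<le> length T"
  by (auto simp: bR1_def get_row_def split: if_splits)

lemma J_sub: "J \<subseteq> {1..length R1}" by (auto simp: bJ_def)
lemma J_fin: "finite J" using J_sub finite_subset by blast

lemma J_iff: "j \<in> J \<longleftrightarrow> (Suc r, j) \<in> cells T \<and> (\<exists>z\<in>ents (cell T (Suc r) j). l < z)"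
  using R1_cells R1_cell by (auto simp: bJ_def)

lemma c_in_J: assumes "c \<le> length R1" shows "c \<in> J"
proof -
  have cc: "(Suc r, c) \<in> cells T" using assms bc_facts(1) R1_cells by simp
  have "l < hentry (cell T (Suc r) c)"
    using HVT_col_ents[OF H c_cell(1) cc _ _ hentry_in] l_ents c_cell(2) by simp
  then show ?thesis using J_iff cc hentry_in by blast
qed

lemma ct_le_c: "ct \<le> c"
proof (cases "J = {}")
  case True
  then have "\<not> c \<le> length R1" using c_in_J by blast
  then show ?thesis using True by (simp add: bct_def)
next
  case False
  show ?thesis
  proof (cases "c \<le> length R1")
    case True
    then show ?thesis using c_in_J False J_fin by (simp add: bct_def)
  next
    case F: False
    have "Min J \<in> J" using Min_in[OF J_fin False] .
    then have "Min J \<le> length R1" using J_sub by auto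
    then show ?thesis using F False by (simp add: bct_def)
  qed
qed

lemma new_len: "J = {} \<Longrightarrow> length R1 < c"
  using c_in_J by (metis empty_iff not_le)

lemma ct_new: "J = {} \<Longrightarrow> ct = Suc (length R1)" by (simp add: bct_def)

lemma ct_ge1: "1 \<le> ct"
proof (cases "J = {}")
  case True then show ?thesis by (simp add: bct_def)
next
  case False
  then have "Min J \<in> J" using Min_in[OF J_fin] by blast
  then show ?thesis using J_sub False by (auto simp: bct_def)
qed

lemma ct_J: "J \<noteq> {} \<Longrightarrow> ct \<in> J" using Min_in[OF J_fin] by (simp add: bct_def)

lemma ct_cell: "J \<noteq> {} \<Longrightarrow> (Suc r, ct) \<in> cells T" using ct_J J_iff by blast

lemma left_le: assumes "(Suc r, j) \<in> cells T" "j < ct" "z \<in> ents (cell T (Suc r) j)" shows "z \<le> l"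
proof -
  have "j \<notin> J"
  proof
    assume "j \<in> J"
    then have "ct \<le> j" using Min_le[OF J_fin] by (auto simp: bct_def)
    with assms(2) show False by simp
  qed
  then show ?thesis using assms J_iff by (meson not_le)
qed

lemma k_facts:
  assumes "J \<noteq> {}"
  shows "k \<in> ents (cell T (Suc r) ct)" "l < k" "\<And>z. z \<in> ents (cell T (Suc r) ct) \<Longrightarrow> l < z \<Longrightarrow> k \<le> z"
proof -
  have cc: "(Suc r, ct) \<in> cells T" using ct_cell[OF assms] .
  have ctr: "1 \<le> ct" "ct \<le> length R1" using cc R1_cells by auto
  let ?Z = "{z \<in> set (hook_entries (R1 ! (ct - 1))). l < z}"
  have kdef: "k = Min ?Z" using assms by (simp add: bk_def)
  have Zeq: "?Z = {z \<in> ents (cell T (Suc r) ct). l < z}" using R1_cell[OF ctr] by simp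
  have fin: "finite ?Z" by simp
  have ne: "?Z \<noteq> {}" using ct_J[OF assms] J_iff Zeq by auto
  have "k \<in> ?Z" unfolding kdef using Min_in[OF fin ne] .
  then show "k \<in> ents (cell T (Suc r) ct)" "l < k" using Zeq by auto
  show "\<And>z. z \<in> ents (cell T (Suc r) ct) \<Longrightarrow> l < z \<Longrightarrow> k \<le> z"
    unfolding kdef using Min_le[OF fin] Zeq by blast
qed

lemma k_bound:
  assumes "z \<in> rowvals T (Suc r)" "l < z"
  shows "J \<noteq> {}" "k \<le> z"
proof -
  obtain j where j: "(Suc r, j) \<in> cells T" "z \<in> ents (cell T (Suc r) j)" using assms rowvals_iff by blast
  then have jJ: "j \<in> J" using J_iff assms by blast
  then show ne: "J \<noteq> {}" by blast
  have "ct \<le> j" using jJ Min_le[OF J_fin] by (auto simp: bct_def)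
  show "k \<le> z"
  proof (cases "ct = j")
    case True
    then show ?thesis using k_facts(3)[OF ne] j assms by simp
  next
    case False
    then have "ct < j" using \<open>ct \<le> j\<close> by simp
    then show ?thesis using HVT_row_ents[OF H ct_cell[OF ne] j(1) _ k_facts(1)[OF ne] j(2)] by simp
  qed
qed

end


lemma sorted_le_last: "sorted xs \<Longrightarrow> z \<in> set xs \<Longrightarrow> z \<le> last xs"
proof (induction xs)
  case (Cons x xs)
  show ?case
  proof (cases "xs = []")
    case True then show ?thesis using Cons by simp
  next
    case False
    then have "last xs \<in> set xs" by simp
    then show ?thesis using Cons False by auto
  qed
qed simp

lemma strict_sorted_remove1: "sorted_wrt (<) xs \<Longrightarrow> sorted_wrt (<) (remove1 a xs)"
  by (induction xs) (auto dest: subsetD[OF set_remove1_subset])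

lemma strict_sorted_remove1_lt:
  assumes "sorted_wrt (<) xs" "y \<in> set (remove1 a xs)" "a = Max (set xs)"
  shows "y < a"
proof -
  have d: "distinct xs" using assms(1) by (simp add: strict_sorted_iff)
  have "y \<in> set xs" using assms(2) set_remove1_subset by fast
  then have "y \<le> a" using assms(3) by simp
  moreover have "y \<noteq> a" using assms(2) d by simp
  ultimately show ?thesis by simp
qed

context bctx begin

abbreviation "hr \<equiv> bhr T"
abbreviation "hn \<equiv> bhn T"
abbreviation "M \<equiv> bM T"
abbreviation "g \<equiv> cell T (Suc r) ct"
abbreviation "T1 \<equiv> upd T r c hr"

lemma arm_le_ba: "z \<in> set (harm h) \<Longrightarrow> z \<le> ba T"
  using sorted_le_last valid_hookD(5)[OF h_valid] by (simp add: ba_def)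

lemma M_facts: "set M \<subseteq> ents h" "\<And>z. z \<in> set M \<Longrightarrow> l \<le> z"
  by (auto simp: bM_def ents_eq)

lemma hr_entry: "hentry hr = hentry h" by (simp add: bhr_def)
lemma hr_leg: "hleg hr = remove1 l (hleg h)" by (simp add: bhr_def)

lemma hr_sub: "ents hr \<subseteq> ents h"
  by (auto simp: bhr_def ents_eq dest: subsetD[OF set_remove1_subset])

lemma hr_keep: "z \<in> ents h \<Longrightarrow> z < l \<Longrightarrow> z \<in> ents hr"
  by (auto simp: bhr_def ents_eq in_set_remove1)

lemma hr_valid: "valid_hook hr"
proof (rule valid_hookI)
  show "0 < hentry hr" using valid_hookD(1)[OF h_valid] hr_entry by simp
  show "hentry hr < y" if "y \<in> set (hleg hr)" for y
    using that valid_hookD(2)[OF h_valid] hr_entry hr_leg set_remove1_subset by (metis subsetD)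
  show "hentry hr \<le> y" if "y \<in> set (harm hr)" for y
    using that valid_hookD(3)[OF h_valid] by (auto simp: bhr_def split: if_splits)
  show "sorted_wrt (<) (hleg hr)" using valid_hookD(4)[OF h_valid] hr_leg strict_sorted_remove1 by simp
  show "sorted (harm hr)" using valid_hookD(5)[OF h_valid] by (auto simp: bhr_def sorted_wrt_filter)
qed

lemma hr_lt: assumes "ct = c" "z \<in> ents hr" shows "z < l"
proof -
  have "z = hentry h \<or> z \<in> set (remove1 l (hleg h)) \<or> (z \<in> set (harm h) \<and> \<not> (l \<le> z \<and> z \<le> ba T))"
    using assms by (auto simp: bhr_def ents_eq)
  then show ?thesis
  proof (elim disjE)
    assume "z \<in> set (remove1 l (hleg h))"
    then show ?thesis using strict_sorted_remove1_lt[OF valid_hookD(4)[OF h_valid]] by (simp add: bl_def)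
  qed (use l_gt_entry arm_le_ba in auto)
qed

lemma hmin_hr: "hmin hr = hmin h" using hmin_valid[OF hr_valid] hmin_valid[OF h_valid] hr_entry by simp
lemma hmax_hr: "hmax hr \<le> hmax h" using hr_sub hmax_le_iff le_hmax by blast

lemma T1_HVT: "is_HVT T1"
proof (rule HVT_upd[OF H c_cell(1) hr_valid])
  show "hmax (cell T r c') \<le> hmin hr" if "(r, c') \<in> cells T" "c' < c" for c'
    using HVT_row[OF H that(1) c_cell(1) that(2)] hmin_hr c_cell(2) by simp
  show "hmax hr \<le> hmin (cell T r c')" if "(r, c') \<in> cells T" "c < c'" for c'
    using HVT_row[OF H c_cell(1) that(1) that(2)] hmax_hr c_cell(2) by simp
  show "hmax (cell T r' c) < hmin hr" if "(r', c) \<in> cells T" "r' < r" for r'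
    using HVT_col[OF H that(1) c_cell(1) that(2)] hmin_hr c_cell(2) by simp
  show "hmax hr < hmin (cell T r' c)" if "(r', c) \<in> cells T" "r < r'" for r'
    using HVT_col[OF H c_cell(1) that(1) that(2)] hmax_hr c_cell(2) by simp
qed

lemma T1_cell: "(a,b) \<in> cells T \<Longrightarrow> cell T1 a b = (if a = r \<and> b = c then hr else cell T a b)"
  using cell_upd[OF c_cell(1)] by simp

lemma get_row_T1: "get_row T1 (Suc r) = R1"
  using r_ge1 by (simp add: get_row_def upd_def bR1_def nth_list_update)

lemma bump_split: "bump T = (if J = {} then app T1 (Suc r) hn else upd T1 (Suc r) ct hn)"
proof -
  have s1: "set_row T r ((bR T)[c - 1 := hr]) = T1"
    using r_le R_eq by (simp add: set_row_def upd_def)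
  show ?thesis
  proof (cases "J = {}")
    case True
    then show ?thesis using s1 get_row_T1 by (simp add: bump_eq app_def)
  next
    case False
    then have "R1 \<noteq> []" using J_sub ct_J by fastforce
    then have "Suc r \<le> length T" using R1_ne_len by simp
    moreover have "T1 ! r = R1" using get_row_T1 \<open>Suc r \<le> length T\<close> by (simp add: get_row_def)
    ultimately show ?thesis using s1 False
      by (simp add: bump_eq set_row_def upd_def)
  qed
qed

lemma g_entry_gt_ct_c: assumes "J \<noteq> {}" "ct = c" shows "l < hentry g" "k = hentry g"
proof -
  have cc: "(Suc r, c) \<in> cells T" using ct_cell[OF assms(1)] assms(2) by simp
  have lc: "l \<in> ents (cell T r c)" using l_ents c_cell(2) by simp
  show lt: "l < hentry g"
    using HVT_col_ents[OF H c_cell(1) cc _ lc hentry_in] assms(2) by simp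
  have "k \<le> hentry g" using k_facts(3)[OF assms(1) hentry_in lt] .
  moreover have "hentry g \<le> k"
    using hmin_le[OF k_facts(1)[OF assms(1)]] hmin_valid[OF HVT_valid[OF H ct_cell[OF assms(1)]]] by simp
  ultimately show "k = hentry g" by simp
qed

lemma g_leg: "J \<noteq> {} \<Longrightarrow> hleg g = []" using R1_legs ct_cell by blast
lemma g_valid: "J \<noteq> {} \<Longrightarrow> valid_hook g" using HVT_valid[OF H ct_cell] by blast

lemma g_cell_eq: "J \<noteq> {} \<Longrightarrow> bR1 T ! (ct - 1) = g"
  using R1_cell ct_cell R1_cells by auto

lemma hn_A1:
  assumes "J \<noteq> {}" "ct \<noteq> c"
  shows "valid_hook hn" "ents hn = insert l (ents g)" "hleg hn = [k]"
proof -
  have gl: "hleg g = []" using g_leg[OF assms(1)] .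
  have gv: "valid_hook g" using g_valid[OF assms(1)] .
  have hn: "hn = add_to_leg (replace_entry g k l) k" using assms g_cell_eq by (simp add: bhn_def)
  have kg: "k \<in> ents g" "l < k" using k_facts[OF assms(1)] by auto
  have all: "valid_hook hn \<and> ents hn = insert l (ents g) \<and> hleg hn = [k]"
  proof (cases "hentry g = k")
    case True
    then have hn': "hn = (l, [k], harm g)" using gl
      by (simp add: hn replace_entry_def add_to_leg_def hentry_def hleg_def harm_def)
    have la: "\<forall>y\<in>set (harm g). l \<le> y" using valid_hookD(3)[OF gv] True kg by force
    have "valid_hook hn"
      using hn' True l_pos kg valid_hookD(5)[OF gv] la by (auto simp: valid_hook_def)
    moreover have "ents hn = insert l (ents g)" using hn' True gl by (auto simp: ents_eq)
    ultimately show ?thesis using hn' by simp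
  next
    case False
    have "hentry g \<le> l"
    proof (rule ccontr)
      assume "\<not> hentry g \<le> l"
      then have "k \<le> hentry g" using k_facts(3)[OF assms(1) hentry_in] by simp
      moreover have "hentry g \<le> k" using hmin_le[OF kg(1)] hmin_valid[OF gv] by simp
      ultimately show False using False by simp
    qed
    have karm: "k \<in> set (harm g)" using kg(1) False gl by (simp add: ents_eq)
    have hn': "hn = (hentry g, [k], insort l (remove1 k (harm g)))" using gl False
      by (simp add: hn replace_entry_def add_to_leg_def hentry_def hleg_def harm_def)
    have "valid_hook hn"
    proof (rule valid_hookI)
      show "0 < hentry hn" using hn' valid_hookD(1)[OF gv] by simp
      show "hentry hn < y" if "y \<in> set (hleg hn)" for y using that hn' \<open>hentry g \<le> l\<close> kg by simp
      show "hentry hn \<le> y" if "y \<in> set (harm hn)" for y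
        using that hn' \<open>hentry g \<le> l\<close> valid_hookD(3)[OF gv] by (auto simp: set_insort_key dest: subsetD[OF set_remove1_subset])
      show "sorted_wrt (<) (hleg hn)" using hn' by simp
      show "sorted (harm hn)" using hn' valid_hookD(5)[OF gv] by (simp add: sorted_insort sorted_remove1)
    qed
    moreover have "ents hn = insert l (ents g)"
    proof -
      have "set (harm g) \<subseteq> insert k (set (remove1 k (harm g)))"
        by (metis insert_Diff set_remove1_subset subset_insertI subsetI in_set_remove1 insertI1 insertI2)
      moreover have "set (remove1 k (harm g)) \<subseteq> set (harm g)" by (rule set_remove1_subset)
      ultimately show ?thesis using hn' karm gl by (auto simp: ents_eq set_insort_key)
    qed
    ultimately show ?thesis using hn' by simp
  qed
then show "valid_hook hn" "ents hn = insert l (ents g)" "hleg hn = [k]" by auto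
qed

lemma hn_B1:
  assumes "J \<noteq> {}" "ct = c"
  shows "valid_hook hn" "ents hn = insert l (ents g) \<union> set M" "hleg hn = [k]"
proof -
  have gl: "hleg g = []" using g_leg[OF assms(1)] .
  have gv: "valid_hook g" using g_valid[OF assms(1)] .
  have kk: "l < hentry g" "k = hentry g" using g_entry_gt_ct_c[OF assms] by auto
  have hn': "hn = (l, [k], sort (harm g @ M))" using assms g_cell_eq gl by (simp add: bhn_def)
  have la: "\<forall>y\<in>set (harm g). l \<le> y" using valid_hookD(3)[OF gv] kk by force
  show "valid_hook hn"
  proof (rule valid_hookI)
    show "0 < hentry hn" using hn' l_pos by simp
    show "hentry hn < y" if "y \<in> set (hleg hn)" for y using that hn' kk by simp
    show "hentry hn \<le> y" if "y \<in> set (harm hn)" for y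
      using that hn' la M_facts(2) by auto
    show "sorted_wrt (<) (hleg hn)" using hn' by simp
    show "sorted (harm hn)" using hn' by simp
  qed
  show "ents hn = insert l (ents g) \<union> set M" using hn' kk gl by (auto simp: ents_eq)
  show "hleg hn = [k]" using hn' by simp
qed

lemma hn_A2: assumes "J = {}" "ct \<noteq> c" shows "hn = (l, [], [])"
  using assms by (simp add: bhn_def)

lemma hn_B2: assumes "J = {}" "ct = c" shows "hn = (l, [], sort M)"
  using assms by (simp add: bhn_def)

lemma hn_new_valid: assumes "J = {}" shows "valid_hook hn"
proof (cases "ct = c")
  case True
  then show ?thesis using hn_B2[OF assms] l_pos M_facts(2) by (auto simp: valid_hook_def)
next
  case False
  then show ?thesis using hn_A2[OF assms] l_pos by (auto simp: valid_hook_def)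
qed

lemma hn_valid: "valid_hook hn"
  using hn_new_valid hn_A1(1) hn_B1(1) by blast

lemma hn_ents: "z \<in> ents hn \<Longrightarrow> z = l \<or> (J \<noteq> {} \<and> z \<in> ents g) \<or> (ct = c \<and> z \<in> set M)"
proof -
  assume z: "z \<in> ents hn"
  show ?thesis
  proof (cases "J = {}")
    case True
    then show ?thesis using z hn_A2 hn_B2 by (cases "ct = c") (auto simp: ents_eq)
  next
    case False
    then show ?thesis using z hn_A1(2) hn_B1(2) by (cases "ct = c") auto
  qed
qed

lemma hn_l: "l \<in> ents hn"
proof (cases "J = {}")
  case True
  then show ?thesis using hn_A2 hn_B2 by (cases "ct = c") (auto simp: ents_eq)
next
  case False
  then show ?thesis using hn_A1(2) hn_B1(2) by (cases "ct = c") auto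
qed

lemma hn_g: "J \<noteq> {} \<Longrightarrow> ents g \<subseteq> ents hn"
  using hn_A1(2) hn_B1(2) by (cases "ct = c") auto

lemma hn_leg: "hleg hn = (if J = {} then [] else [k])"
  using hn_A1(3) hn_B1(3) hn_A2 hn_B2 by (cases "J = {}"; cases "ct = c") auto

end


context bctx begin

lemma ct_cells_r: "(r, ct) \<in> cells T"
  using ct_ge1 ct_le_c bc_facts(2) r_cells by simp

lemma hentry_r_ct: "hentry (cell T r ct) < l"
proof (cases "ct = c")
  case True then show ?thesis using c_cell l_gt_entry by simp
next
  case False
  then have "ct < c" using ct_le_c by simp
  then have "hentry (cell T r ct) \<le> hentry h"
    using HVT_row_ents[OF H ct_cells_r c_cell(1) _ hentry_in] c_cell(2) hentry_in by (metis)
  then show ?thesis using l_gt_entry by simp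
qed

lemma below_l:
  assumes "(r', ct) \<in> cells T" "r' \<le> r" "y \<in> ents (cell T1 r' ct)"
  shows "y < l"
proof (cases "r' = r")
  case True
  show ?thesis
  proof (cases "ct = c")
    case True
    then show ?thesis using assms \<open>r' = r\<close> hr_lt T1_cell by auto
  next
    case False
    then have "ct < c" using ct_le_c by simp
    have y: "y \<in> ents (cell T r ct)" using assms True False T1_cell by auto
    have "y \<le> hentry h"
      using HVT_row_ents[OF H ct_cells_r c_cell(1) \<open>ct < c\<close> y] c_cell(2) hentry_in by simp
    then show ?thesis using l_gt_entry by simp
  qed
next
  case False
  then have lt: "r' < r" using assms by simp
  have y: "y \<in> ents (cell T r' ct)" using assms False T1_cell by auto
  have "y < hentry (cell T r ct)" using HVT_col_ents[OF H assms(1) ct_cells_r lt y hentry_in] .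
  then show ?thesis using hentry_r_ct by simp
qed

lemma below_g:
  assumes "J \<noteq> {}" "(r', ct) \<in> cells T" "r' \<le> r" "y \<in> ents (cell T1 r' ct)" "z \<in> ents g"
  shows "y < z"
proof -
  have cg: "(Suc r, ct) \<in> cells T" using ct_cell[OF assms(1)] .
  show ?thesis
  proof (cases "r' = r \<and> ct = c")
    case True
    then have "y \<in> ents (cell T r c)" using assms T1_cell hr_sub c_cell(2) by auto
    moreover have "(Suc r, c) \<in> cells T" "z \<in> ents (cell T (Suc r) c)" using True cg assms(5) by auto
    ultimately show ?thesis using HVT_col_ents[OF H c_cell(1)] by simp
  next
    case False
    then have "y \<in> ents (cell T r' ct)" using assms T1_cell by auto
    then show ?thesis using HVT_col_ents[OF H assms(2) cg _ _ assms(5)] assms(3) by simp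
  qed
qed

lemma M_below_g: assumes "J \<noteq> {}" "ct = c" "z \<in> set M" shows "z < hentry g"
proof -
  have cg: "(Suc r, c) \<in> cells T" using ct_cell[OF assms(1)] assms(2) by simp
  have "z \<in> ents (cell T r c)" using M_facts(1) assms(3) c_cell(2) by auto
  then show ?thesis using HVT_col_ents[OF H c_cell(1) cg _ _ hentry_in] assms(2) by simp
qed

lemma bump_HVT: "is_HVT (bump T)"
proof (cases "J = {}")
  case False
  have cc: "(Suc r, ct) \<in> cells T1" using ct_cell[OF False] by simp
  have gv: "valid_hook g" using g_valid[OF False] .
  have kg: "k \<in> ents g" "l < k" using k_facts[OF False] by auto
  have "is_HVT (upd T1 (Suc r) ct hn)"
  proof (rule HVT_upd[OF T1_HVT cc hn_valid])
    fix c' assume a: "(Suc r, c') \<in> cells T1" "c' < ct"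
    then have a': "(Suc r, c') \<in> cells T" by simp
    have eq: "cell T1 (Suc r) c' = cell T (Suc r) c'" using T1_cell[OF a'] by simp
    show "hmax (cell T1 (Suc r) c') \<le> hmin hn"
      unfolding eq hmin_ge_iff
    proof
      fix z assume z: "z \<in> ents hn"
      have hl: "hmax (cell T (Suc r) c') \<le> l" using left_le[OF a' a(2)] hmax_le_iff by blast
      from hn_ents[OF z] show "hmax (cell T (Suc r) c') \<le> z"
      proof (elim disjE conjE)
        assume "z \<in> ents g"
        then show ?thesis using HVT_row[OF H a' ct_cell[OF False] a(2)] hmin_le[of z g] by simp
      qed (use hl M_facts(2) in \<open>auto intro: order_trans\<close>)
    qed
  next
    fix c' assume a: "(Suc r, c') \<in> cells T1" "ct < c'"
    then have a': "(Suc r, c') \<in> cells T" by simp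
    have eq: "cell T1 (Suc r) c' = cell T (Suc r) c'" using T1_cell[OF a'] by simp
    have gm: "hmax g \<le> hmin (cell T (Suc r) c')" using HVT_row[OF H ct_cell[OF False] a' a(2)] .
    show "hmax hn \<le> hmin (cell T1 (Suc r) c')"
      unfolding eq hmax_le_iff
    proof
      fix z assume z: "z \<in> ents hn"
      from hn_ents[OF z] show "z \<le> hmin (cell T (Suc r) c')"
      proof (elim disjE conjE)
        assume "z = l" then show ?thesis using kg le_hmax[of k g] gm by simp
      next
        assume "z \<in> ents g" then show ?thesis using le_hmax[of z g] gm by simp
      next
        assume "ct = c" "z \<in> set M"
        then show ?thesis using M_below_g[OF False] le_hmax[OF hentry_in, of g] gm by fastforce
      qed
    qed
  next
    fix r' assume a: "(r', ct) \<in> cells T1" "r' < Suc r"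
    then have a': "(r', ct) \<in> cells T" "r' \<le> r" by auto
    show "hmax (cell T1 r' ct) < hmin hn"
      unfolding hmin_gt_iff
    proof
      fix z assume z: "z \<in> ents hn"
      show "hmax (cell T1 r' ct) < z" unfolding hmax_lt_iff
      proof
        fix y assume y: "y \<in> ents (cell T1 r' ct)"
        have yl: "y < l" using below_l[OF a' y] .
        from hn_ents[OF z] show "y < z"
        proof (elim disjE conjE)
          assume "z \<in> ents g" then show ?thesis using below_g[OF False a' y] by simp
        qed (use yl M_facts(2) in \<open>auto intro: less_le_trans\<close>)
      qed
    qed
  next
    fix r' assume a: "(r', ct) \<in> cells T1" "Suc r < r'"
    then have a': "(r', ct) \<in> cells T" by simp
    have eq: "cell T1 r' ct = cell T r' ct" using T1_cell[OF a'] a by simp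
    show "hmax hn < hmin (cell T1 r' ct)"
      unfolding eq hmax_lt_iff
    proof
      fix z assume z: "z \<in> ents hn"
      from hn_ents[OF z] show "z < hmin (cell T r' ct)"
      proof (elim disjE conjE)
        assume "z = l"
        then show ?thesis using kg HVT_col_ents[OF H ct_cell[OF False] a' a(2) kg(1)] hmin_gt_iff
          by (metis order.strict_trans)
      next
        assume "z \<in> ents g"
        then show ?thesis using HVT_col_ents[OF H ct_cell[OF False] a' a(2)] hmin_gt_iff by blast
      next
        assume ctc: "ct = c" "z \<in> set M"
        then have "z \<in> ents (cell T r c)" using M_facts(1) c_cell(2) by auto
        then show ?thesis using HVT_col_ents[OF H c_cell(1)] a' a(2) ctc hmin_gt_iff
          by (metis Suc_lessD)
      qed
    qed
  qed
  then show ?thesis using bump_split False by simp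
next
  case True
  have lenT1: "length (T1 ! (Suc r - 2)) = length R"
    using r_ge1 r_le R_eq by (simp add: upd_def nth_list_update)
  have "is_HVT (app T1 (Suc r) hn)"
  proof (rule HVT_app[OF T1_HVT])
    show "2 \<le> Suc r" using r_ge1 by simp
    show "Suc r \<le> Suc (length T1)" using r_le by simp
    show "length (get_row T1 (Suc r)) < length (T1 ! (Suc r - 2))"
      unfolding get_row_T1 lenT1 using new_len[OF True] bc_facts(2) by simp
    show "valid_hook hn" by (rule hn_valid)
  next
    fix c' assume a: "(Suc r, c') \<in> cells T1"
    then have a': "(Suc r, c') \<in> cells T" by simp
    have lt: "c' < ct" using a' R1_cells ct_new[OF True] by simp
    have eq: "cell T1 (Suc r) c' = cell T (Suc r) c'" using T1_cell[OF a'] by simp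
    show "hmax (cell T1 (Suc r) c') \<le> hmin hn"
      unfolding eq hmin_ge_iff
    proof
      fix z assume z: "z \<in> ents hn"
      have hl: "hmax (cell T (Suc r) c') \<le> l" using left_le[OF a' lt] hmax_le_iff by blast
      from hn_ents[OF z] show "hmax (cell T (Suc r) c') \<le> z"
        using hl M_facts(2) True by (auto intro: order_trans)
    qed
  next
    fix r' assume a: "(r', Suc (length (get_row T1 (Suc r)))) \<in> cells T1" "r' < Suc r"
    then have a': "(r', ct) \<in> cells T" "r' \<le> r" using get_row_T1 ct_new[OF True] by auto
    show "hmax (cell T1 r' (Suc (length (get_row T1 (Suc r))))) < hmin hn"
      unfolding get_row_T1 ct_new[OF True, symmetric] hmin_gt_iff
    proof
      fix z assume z: "z \<in> ents hn"
      show "hmax (cell T1 r' ct) < z" unfolding hmax_lt_iff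
      proof
        fix y assume y: "y \<in> ents (cell T1 r' ct)"
        have yl: "y < l" using below_l[OF a' y] .
        from hn_ents[OF z] show "y < z" using yl M_facts(2) True by (auto intro: less_le_trans)
      qed
    qed
  qed
  then show ?thesis using bump_split True by simp
qed

end


lemma get_row_upd: assumes "1 \<le> a" shows "get_row (upd X a b y) t = (if t = a then (get_row X a)[b-1 := y] else get_row X t)"
proof (cases "t = a")
  case ta: True
  show ?thesis
  proof (cases "a \<le> length X")
    case True
    then have "a - 1 < length X" using assms by simp
    then show ?thesis using ta True assms by (simp add: get_row_def upd_def)
  next
    case False
    then show ?thesis using ta by (simp add: get_row_def upd_def)
  qed
next
  case F: False
  show ?thesis
  proof (cases "1 \<le> t \<and> t \<le> length X")
    case True
    then have "t - 1 \<noteq> a - 1" "t - 1 < length X" using assms F by auto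
    then show ?thesis using True F by (simp add: get_row_def upd_nth)
  next
    case False
    then have "get_row (upd X a b y) t = []" "get_row X t = []"
      unfolding get_row_def length_upd by (meson if_not_P)+
    then show ?thesis using F by simp
  qed
qed

lemma get_row_app: assumes a: "1 \<le> a" "a \<le> Suc (length X)" shows
   "get_row (app X a y) t = (if t = a then get_row X a @ [y] else get_row X t)"
proof -
  have L: "length (app X a y) = (if a \<le> length X then length X else Suc (length X))"
    by (rule length_app[OF a])
  show ?thesis
  proof (cases "t = a")
    case True
    have "1 \<le> a \<and> a \<le> length (app X a y)" using L a by auto
    then have e1: "get_row (app X a y) a = app X a y ! (a - 1)" by (simp add: get_row_def)
    have "a - 1 < length (app X a y)" using L a by (cases "a \<le> length X") auto
    then have e2: "app X a y ! (a - 1) = get_row X a @ [y]" using app_nth[OF a, of "a - 1" y] by simp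
    show ?thesis using True e1 e2 by simp
  next
    case F: False
    show ?thesis
    proof (cases "1 \<le> t \<and> t \<le> length (app X a y)")
      case True
      then have t: "t - 1 \<noteq> a - 1" "t \<le> length X" "t - 1 < length (app X a y)"
        using a F L by (auto split: if_splits)
      have "get_row (app X a y) t = app X a y ! (t - 1)" using True by (simp add: get_row_def)
      also have "\<dots> = X ! (t - 1)" using app_nth[OF a t(3)] t(1) by simp
      also have "\<dots> = get_row X t" using True t by (simp add: get_row_def)
      finally show ?thesis using F by simp
    next
      case False
      then have "get_row (app X a y) t = []" unfolding get_row_def by (meson if_not_P)
      moreover have "get_row X t = []" using False L by (auto simp: get_row_def split: if_splits)
      ultimately show ?thesis using F by simp
    qed
  qed
qed

lemma rowcnt_update: "i < length xs \<Longrightarrow> rowcnt (xs[i:=y]) + length (hleg (xs!i)) = rowcnt xs + length (hleg y)"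
proof (induction xs arbitrary: i)
  case (Cons x xs)
  then show ?case by (cases i) (auto simp: rowcnt_def)
qed simp

lemma rowcnt_append: "rowcnt (xs @ [y]) = rowcnt xs + length (hleg y)"
  by (simp add: rowcnt_def)

lemma excess_sum:
  assumes "length T \<le> N"
  shows "leg_excess T = (\<Sum>t\<in>{1..N}. cnt T t)"
proof -
  have "leg_excess T = (\<Sum>i<length T. rowcnt (T!i))"
    unfolding leg_excess_rowcnt by (simp add: sum_list_sum_nth atLeast0LessThan)
  also have "\<dots> = (\<Sum>i<length T. cnt T (Suc i))"
    by (rule sum.cong) (auto simp: cnt_def get_row_def)
  also have "\<dots> = (\<Sum>t\<in>{1..length T}. cnt T t)"
    by (simp add: sum.atLeast1_atMost_eq)
  also have "\<dots> = (\<Sum>t\<in>{1..N}. cnt T t)"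
    by (rule sum.mono_neutral_left) (use assms cnt_out in auto)
  finally show ?thesis .
qed

lemma sum_two:
  fixes f g :: "nat \<Rightarrow> nat"
  assumes "finite S" "a \<in> S" "b \<in> S" "a \<noteq> b" "\<And>t. t \<in> S \<Longrightarrow> t \<noteq> a \<Longrightarrow> t \<noteq> b \<Longrightarrow> f t = g t"
  shows "sum f S + g a + g b = sum g S + f a + f b"
proof -
  have "sum f S = f a + f b + sum f (S - {a} - {b})"
    using assms by (simp add: sum.remove[of S a] sum.remove[of "S - {a}" b])
  moreover have "sum g S = g a + g b + sum g (S - {a} - {b})"
    using assms by (simp add: sum.remove[of S a] sum.remove[of "S - {a}" b])
  moreover have "sum f (S - {a} - {b}) = sum g (S - {a} - {b})"
    by (rule sum.cong) (use assms in auto)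
  ultimately show ?thesis by simp
qed

context bctx begin

lemma T1_row_r: "get_row T1 r = R[c - 1 := hr]"
  using r_ge1 r_le R_eq by (simp add: get_row_upd) (simp add: bR_def get_row_def)

lemma T1_row_other: "t \<noteq> r \<Longrightarrow> get_row T1 t = get_row T t"
  using get_row_upd[OF r_ge1, of T c hr t] by simp

lemma row_bump:
  "get_row (bump T) t = (if t = r then R[c - 1 := hr]
     else if t = Suc r then (if J = {} then R1 @ [hn] else R1[ct - 1 := hn]) else get_row T t)"
proof (cases "J = {}")
  case True
  have e: "get_row (bump T) t = (if t = Suc r then get_row T1 (Suc r) @ [hn] else get_row T1 t)"
    using bump_split True get_row_app[of "Suc r" T1 hn t] r_le by simp
  show ?thesis
  proof (cases "t = Suc r")
    case True
    then show ?thesis using e get_row_T1 \<open>J = {}\<close> by simp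
  next
    case False
    then show ?thesis using e T1_row_r T1_row_other[of t] by (cases "t = r") simp_all
  qed
next
  case False
  have e: "get_row (bump T) t = (if t = Suc r then (get_row T1 (Suc r))[ct - 1 := hn] else get_row T1 t)"
    using bump_split False get_row_upd[of "Suc r" T1 ct hn t] by simp
  show ?thesis
  proof (cases "t = Suc r")
    case True
    then show ?thesis using e get_row_T1 \<open>J \<noteq> {}\<close> by simp
  next
    case F: False
    then show ?thesis using e T1_row_r T1_row_other[of t] by (cases "t = r") simp_all
  qed
qed

lemma cnt_bump_r: "cnt (bump T) r + 1 = cnt T r"
proof -
  have c1: "c - 1 < length R" using bc_facts(1,2) by simp
  have hc: "R ! (c - 1) = h" by (simp add: bh_def)
  have "length (hleg hr) + 1 = length (hleg h)"
    using hr_leg l_leg length_remove1[of l "hleg h"] length_pos_if_in_set[OF l_leg] by simp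
  then show ?thesis using rowcnt_update[OF c1, of hr] hc row_bump[of r]
    by (simp add: cnt_def bR_def)
qed

lemma rowcnt_R1: "rowcnt R1 = 0"
  using cnt_above[of "Suc r"] by (simp add: cnt_def bR1_def)

lemma cnt_bump_r1: "cnt (bump T) (Suc r) = (if J = {} then 0 else 1)"
proof (cases "J = {}")
  case True
  then show ?thesis using row_bump[of "Suc r"] rowcnt_R1 hn_leg by (simp add: cnt_def rowcnt_append)
next
  case False
  have i: "ct - 1 < length R1" using ct_cell[OF False] R1_cells by auto
  have "R1 ! (ct - 1) = g" using g_cell_eq[OF False] .
  then show ?thesis using False row_bump[of "Suc r"] rowcnt_R1 hn_leg rowcnt_update[OF i, of hn] g_leg[OF False]
    by (simp add: cnt_def)
qed

lemma cnt_bump_other: "t \<noteq> r \<Longrightarrow> t \<noteq> Suc r \<Longrightarrow> cnt (bump T) t = cnt T t"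
  using row_bump[of t] by (simp add: cnt_def)

lemma length_bump: "length (bump T) = (if J = {} \<and> r = length T then Suc (length T) else length T)"
proof (cases "J = {}")
  case True
  then show ?thesis using bump_split length_app[of "Suc r" T1 hn] r_le r_ge1 by auto
next
  case False
  then show ?thesis using bump_split R1_ne_len J_sub ct_J by (auto simp: upd_def)
qed

lemma excess_bump: "leg_excess (bump T) + 1 = leg_excess T + (if J = {} then 0 else 1)"
proof -
  let ?N = "Suc (length T)"
  have e1: "leg_excess (bump T) = (\<Sum>t\<in>{1..?N}. cnt (bump T) t)"
    by (rule excess_sum) (simp add: length_bump)
  have e2: "leg_excess T = (\<Sum>t\<in>{1..?N}. cnt T t)" by (rule excess_sum) simp
  have "(\<Sum>t\<in>{1..?N}. cnt (bump T) t) + cnt T r + cnt T (Suc r)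
        = (\<Sum>t\<in>{1..?N}. cnt T t) + cnt (bump T) r + cnt (bump T) (Suc r)"
    by (rule sum_two) (use r_ge1 r_le cnt_bump_other in auto)
  then show ?thesis using e1 e2 cnt_bump_r cnt_bump_r1 cnt_above[of "Suc r"] by simp
qed

lemma cells_bump_old: "J \<noteq> {} \<Longrightarrow> cells (bump T) = cells T"
  using bump_split by simp

lemma shape_bump_old: "J \<noteq> {} \<Longrightarrow> shape (bump T) = shape T"
  using bump_split by simp

lemma cells_bump_new:
  assumes "J = {}"
  shows "cells (bump T) = insert (Suc r, Suc (length R1)) (cells T)"
    "(Suc r, Suc (length R1)) \<notin> cells T"
proof -
  show "cells (bump T) = insert (Suc r, Suc (length R1)) (cells T)"
    using bump_split assms cells_app[of "Suc r" T1 hn] r_le get_row_T1 by simp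
  show "(Suc r, Suc (length R1)) \<notin> cells T" using R1_cells[of "Suc (length R1)"] by (meson Suc_n_not_le_n)
qed

lemma shape_bump_new: assumes "J = {}" shows "shape (bump T) \<noteq> shape T"
proof
  assume "shape (bump T) = shape T"
  then have "cells (bump T) = cells T" by (simp add: cells_def)
  with cells_bump_new[OF assms] show False by blast
qed

lemma rv_r1: "insert l (rowvals T (Suc r)) \<subseteq> rowvals (bump T) (Suc r)"
proof -
  have "hn \<in> set (get_row (bump T) (Suc r))"
  proof (cases "J = {}")
    case True then show ?thesis using row_bump[of "Suc r"] by simp
  next
    case False
    have i2: "ct - 1 < length R1" using ct_cell[OF False] R1_cells by auto
    then show ?thesis using row_bump[of "Suc r"] False set_update_memI[OF i2] by simp
  qed
  then have "l \<in> rowvals (bump T) (Suc r)"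
    using hn_l unfolding rowvals_def by blast
  moreover have "rowvals T (Suc r) \<subseteq> rowvals (bump T) (Suc r)"
  proof
    fix z assume "z \<in> rowvals T (Suc r)"
    moreover have "bR1 T = get_row T (Suc r)" by (simp add: bR1_def)
    ultimately obtain x where x: "x \<in> set R1" "z \<in> ents x" unfolding rowvals_def by auto
    show "z \<in> rowvals (bump T) (Suc r)"
    proof (cases "J = {}")
      case True then show ?thesis using x row_bump[of "Suc r"] unfolding rowvals_def by auto
    next
      case False
      obtain i where i: "i < length R1" "R1 ! i = x" using x(1) unfolding in_set_conv_nth by blast
      have i2: "ct - 1 < length R1" using ct_cell[OF False] R1_cells by auto
      show ?thesis
      proof (cases "i = ct - 1")
        case True
        then have "z \<in> ents hn" using hn_g[OF False] g_cell_eq[OF False] i x by auto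
        moreover have "hn \<in> set (get_row (bump T) (Suc r))"
          using row_bump[of "Suc r"] False set_update_memI[OF i2] by simp
        ultimately show ?thesis unfolding rowvals_def by blast
      next
        case F: False
        then have "x \<in> set (R1[ct - 1 := hn])" using i
          by (metis length_list_update nth_list_update_neq nth_mem)
        then show ?thesis using row_bump[of "Suc r"] False x unfolding rowvals_def by auto
      qed
    qed
  qed
  ultimately show ?thesis by simp
qed

lemma rv_r: assumes "z \<in> rowvals T r" "z < l" shows "z \<in> rowvals (bump T) r"
proof -
  obtain x where x: "x \<in> set R" "z \<in> ents x" using assms unfolding rowvals_def bR_def by blast
  obtain i where i: "i < length R" "R ! i = x" using x(1) unfolding in_set_conv_nth by blast
  have c1: "c - 1 < length R" using bc_facts(1,2) by simp
  show ?thesis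
  proof (cases "i = c - 1")
    case True
    then have "z \<in> ents hr" using hr_keep x i assms(2) by (simp add: bh_def)
    moreover have "hr \<in> set (get_row (bump T) r)"
      using row_bump[of r] set_update_memI[OF c1] by simp
    ultimately show ?thesis unfolding rowvals_def by blast
  next
    case False
    then have "x \<in> set (R[c - 1 := hr])" using i
      by (metis length_list_update nth_list_update_neq nth_mem)
    then show ?thesis using row_bump[of r] x unfolding rowvals_def by auto
  qed
qed

lemma rl_r: assumes "y \<in> rowlegs (bump T) r" shows "y < l"
proof -
  have "get_row (bump T) r = R[c - 1 := hr]" using row_bump[of r] by simp
  then obtain x where x: "x \<in> set (R[c - 1 := hr])" "y \<in> set (hleg x)"
    using assms unfolding rowlegs_def by auto
  obtain i where i: "i < length (R[c - 1 := hr])" "R[c - 1 := hr] ! i = x" using x(1) unfolding in_set_conv_nth by blast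
  then have i': "i < length R" by simp
  show ?thesis
  proof (cases "i = c - 1")
    case True
    then have "x = hr" using i bc_facts(1,2) by simp
    then show ?thesis using x hr_leg strict_sorted_remove1_lt[OF valid_hookD(4)[OF h_valid]]
      by (simp add: bl_def)
  next
    case False
    then have xr: "x = cell T r (Suc i)" using i i' r_cell[of "Suc i"] by simp
    have cl: "(r, Suc i) \<in> cells T" using i' r_cells by simp
    have "Suc i \<noteq> c" using False by simp
    then show ?thesis using legs_lt[OF cl] x xr by simp
  qed
qed

lemma rl_r1: "rowlegs (bump T) (Suc r) = (if J = {} then {} else {k})"
proof (cases "J = {}")
  case True
  have "\<forall>x\<in>set R1. hleg x = []" using rowcnt_R1 unfolding rowcnt_0_iff .
  then show ?thesis using True row_bump[of "Suc r"] hn_leg by (auto simp: rowlegs_def)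
next
  case False
  have all: "\<forall>x\<in>set R1. hleg x = []" using rowcnt_R1 unfolding rowcnt_0_iff .
  have i2: "ct - 1 < length R1" using ct_cell[OF False] R1_cells by auto
  have "rowlegs (bump T) (Suc r) = (\<Union>x\<in>set (R1[ct - 1 := hn]). set (hleg x))"
    using row_bump[of "Suc r"] False by (simp add: rowlegs_def)
  also have "\<dots> = {k}"
  proof
    show "(\<Union>x\<in>set (R1[ct - 1 := hn]). set (hleg x)) \<subseteq> {k}"
    proof
      fix y assume "y \<in> (\<Union>x\<in>set (R1[ct - 1 := hn]). set (hleg x))"
      then obtain x where x: "x \<in> set (R1[ct - 1 := hn])" "y \<in> set (hleg x)" by blast
      then have "x \<in> insert hn (set R1)" using set_update_subset_insert[of R1 "ct - 1" hn] by blast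
      then show "y \<in> {k}" using x(2) all hn_leg False by (cases "x = hn") auto
    qed
    have "k \<in> set (hleg hn)" using hn_leg False by simp
    then show "{k} \<subseteq> (\<Union>x\<in>set (R1[ct - 1 := hn]). set (hleg x))"
      using set_update_memI[OF i2, of hn] by blast
  qed
  finally show ?thesis using False by simp
qed

lemma bl_rowlegs: "l \<in> rowlegs T r" "\<And>y. y \<in> rowlegs T r \<Longrightarrow> y \<le> l"
  using rowlegs_iff[of _ T r] legs_le c_cell l_leg by auto

lemma old_excess: "J \<noteq> {} \<Longrightarrow> leg_excess (bump T) = leg_excess T"
  using excess_bump by simp

lemma new_excess: "J = {} \<Longrightarrow> leg_excess (bump T) + 1 = leg_excess T"
  using excess_bump by simp

lemma old_brow: assumes "J \<noteq> {}" shows "brow (bump T) = Suc r"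
proof (rule brow_eqI)
  show "1 \<le> Suc r" by simp
  have "R1 \<noteq> []" using J_sub ct_J[OF assms] by auto
  then show "Suc r \<le> length (bump T)" using R1_ne_len length_bump by simp
  show "0 < cnt (bump T) (Suc r)" using cnt_bump_r1 assms by simp
  show "cnt (bump T) t = 0" if "Suc r < t" for t using that cnt_bump_other cnt_above by simp
qed

lemma old_bl: assumes "J \<noteq> {}" shows "bl (bump T) = k"
proof -
  interpret B: bctx "bump T"
    using bump_HVT old_excess[OF assms] E by unfold_locales auto
  have "bl (bump T) \<in> rowlegs (bump T) (Suc r)" using B.bl_rowlegs(1) old_brow[OF assms] by simp
  then show ?thesis using rl_r1 assms by simp
qed

end


definition S :: "tab \<Rightarrow> nat \<Rightarrow> tab" where "S P i = (Vb ^^ i) P"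

lemma S_0[simp]: "S P 0 = P" by (simp add: S_def)
lemma S_Suc: "S P (Suc i) = Vb (S P i)" by (simp add: S_def)
lemma Vb_bump: "0 < leg_excess X \<Longrightarrow> Vb X = bump X" by (simp add: Vb_def)

lemma rowvals_eq: "get_row X t = get_row Y t \<Longrightarrow> rowvals X t = rowvals Y t"
  by (simp add: rowvals_def)
lemma rowlegs_eq: "get_row X t = get_row Y t \<Longrightarrow> rowlegs X t = rowlegs Y t"
  by (simp add: rowlegs_def)

context bctx begin
lemma row_bump_other: "t \<noteq> r \<Longrightarrow> t \<noteq> Suc r \<Longrightarrow> get_row (bump T) t = get_row T t"
  using row_bump[of t] by simp
lemma row_bump_r: "get_row (bump T) r = R[c - 1 := hr]"
  using row_bump[of r] by simp
end

definition Inv :: "tab \<Rightarrow> nat \<Rightarrow> bool" where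
  "Inv P i \<longleftrightarrow> is_HVT (S P i) \<and> leg_excess (S P i) = leg_excess P \<and> shape (S P i) = shape P
    \<and> brow (S P i) = brow P + i
    \<and> (\<forall>t. brow P < t \<and> t < brow P + i \<longrightarrow> cnt (S P i) t = 0)
    \<and> (0 < i \<longrightarrow> cnt (S P i) (brow P + i) = 1 \<and> cnt (S P i) (brow P) + 1 = cnt P (brow P)
                \<and> (\<forall>y \<in> rowlegs (S P i) (brow P). y < bl P))
    \<and> (\<forall>j<i. bl (S P j) \<in> rowvals (S P i) (brow P + j + 1) \<and> bl (S P j) < bl (S P (Suc j)))"

lemma Inv_0: "is_HVT P \<Longrightarrow> Inv P 0" by (simp add: Inv_def)

lemma Inv_Suc:
  assumes I: "Inv P i" and E: "0 < leg_excess P" and nn: "bJ (S P i) \<noteq> {}"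
  shows "Inv P (Suc i)"
proof -
  let ?X = "S P i"
  let ?r = "brow P"
  have I1: "is_HVT ?X" "leg_excess ?X = leg_excess P" "shape ?X = shape P" "brow ?X = ?r + i"
    "\<And>t. ?r < t \<Longrightarrow> t < ?r + i \<Longrightarrow> cnt ?X t = 0"
    "0 < i \<Longrightarrow> cnt ?X (?r + i) = 1" "0 < i \<Longrightarrow> cnt ?X ?r + 1 = cnt P ?r"
    "0 < i \<Longrightarrow> \<forall>y \<in> rowlegs ?X ?r. y < bl P"
    "\<And>j. j < i \<Longrightarrow> bl (S P j) \<in> rowvals ?X (?r + j + 1)"
    "\<And>j. j < i \<Longrightarrow> bl (S P j) < bl (S P (Suc j))"
    using I unfolding Inv_def by auto
  interpret X: bctx ?X using I1(1,2) E by unfold_locales auto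
  have SS: "S P (Suc i) = bump ?X" using S_Suc Vb_bump I1(2) E by simp
  have br: "brow (bump ?X) = ?r + Suc i" using X.old_brow[OF nn] I1(4) by simp
  have c1: "\<forall>t. ?r < t \<and> t < ?r + Suc i \<longrightarrow> cnt (bump ?X) t = 0"
  proof (intro allI impI)
    fix t assume t: "?r < t \<and> t < ?r + Suc i"
    show "cnt (bump ?X) t = 0"
    proof (cases "t = ?r + i")
      case True
      then have "0 < i" using t by simp
      then show ?thesis using X.cnt_bump_r I1(4,6) True by simp
    next
      case False
      then show ?thesis using X.cnt_bump_other[of t] I1(4,5) t by simp
    qed
  qed
  have c2: "cnt (bump ?X) (?r + Suc i) = 1" using X.cnt_bump_r1 nn I1(4) by simp
  have c3: "cnt (bump ?X) ?r + 1 = cnt P ?r"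
  proof (cases "i = 0")
    case True then show ?thesis using X.cnt_bump_r I1(4) by simp
  next
    case False then show ?thesis using X.cnt_bump_other[of ?r] I1(4,7) by simp
  qed
  have c4: "\<forall>y \<in> rowlegs (bump ?X) ?r. y < bl P"
  proof (cases "i = 0")
    case True then show ?thesis using X.rl_r I1(4) by simp
  next
    case False
    have n1: "?r \<noteq> brow ?X" and n2: "?r \<noteq> Suc (brow ?X)" using I1(4) False by simp_all
    have "get_row (bump ?X) ?r = get_row ?X ?r" using X.row_bump_other[OF n1 n2] .
    then have "rowlegs (bump ?X) ?r = rowlegs ?X ?r" by (rule rowlegs_eq)
    then show ?thesis using I1(8) False by simp
  qed
  have w: "\<forall>j<Suc i. bl (S P j) \<in> rowvals (bump ?X) (?r + j + 1) \<and> bl (S P j) < bl (S P (Suc j))"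
  proof (intro allI impI)
    fix j assume j: "j < Suc i"
    show "bl (S P j) \<in> rowvals (bump ?X) (?r + j + 1) \<and> bl (S P j) < bl (S P (Suc j))"
    proof (cases "j = i")
      case True
      have "bl ?X \<in> rowvals (bump ?X) (Suc (brow ?X))" using X.rv_r1 by auto
      moreover have "bl ?X < bl (S P (Suc i))" using SS X.old_bl[OF nn] X.k_facts(2)[OF nn] by simp
      ultimately show ?thesis using True I1(4) by simp
    next
      case False
      then have ji: "j < i" using j by simp
      have lt: "bl (S P j) < bl (S P (Suc j))" using I1(10)[OF ji] .
      have mem: "bl (S P j) \<in> rowvals ?X (?r + j + 1)" using I1(9)[OF ji] .
      show ?thesis
      proof (cases "Suc j = i")
        case True
        then have "bl (S P j) < bl ?X" using lt by simp
        have eqr: "?r + j + 1 = brow ?X" using True I1(4) by simp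
        have "bl (S P j) \<in> rowvals (bump ?X) (brow ?X)"
          using X.rv_r[of "bl (S P j)"] mem \<open>bl (S P j) < bl ?X\<close> unfolding eqr by blast
        then show ?thesis using lt eqr by simp
      next
        case F: False
        then have n1: "?r + j + 1 \<noteq> brow ?X" and n2: "?r + j + 1 \<noteq> Suc (brow ?X)" using I1(4) ji by simp_all
        have "get_row (bump ?X) (?r + j + 1) = get_row ?X (?r + j + 1)" using X.row_bump_other[OF n1 n2] .
        then have "rowvals (bump ?X) (?r + j + 1) = rowvals ?X (?r + j + 1)" by (rule rowvals_eq)
        then show ?thesis using mem lt by simp
      qed
    qed
  qed
  show ?thesis unfolding Inv_def SS
    using X.bump_HVT X.old_excess[OF nn] I1(2) X.shape_bump_old[OF nn] I1(3) br c1 c2 c3 c4 w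
    by simp
qed

lemma Inv_all:
  assumes "is_HVT P" "0 < leg_excess P" "\<forall>i'<i. bJ (S P i') \<noteq> {}"
  shows "Inv P i"
  using assms(3)
proof (induction i)
  case 0 then show ?case using Inv_0[OF assms(1)] by simp
next
  case (Suc i)
  then show ?case using Inv_Suc[OF _ assms(2)] by simp
qed

lemma Inv_bctx: "Inv P i \<Longrightarrow> 0 < leg_excess P \<Longrightarrow> bctx (S P i)"
  unfolding Inv_def by unfold_locales auto

lemma ex_new:
  assumes "is_HVT P" "0 < leg_excess P"
  shows "\<exists>i. bJ (S P i) = {}"
proof (rule ccontr)
  assume "\<not> ?thesis"
  then have all: "\<forall>i'<i. bJ (S P i') \<noteq> {}" for i by blast
  let ?i = "length P"
  have I: "Inv P ?i" using Inv_all[OF assms all] .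
  interpret X: bctx "S P ?i" using Inv_bctx[OF I assms(2)] .
  have "brow (S P ?i) = brow P + ?i" "shape (S P ?i) = shape P" using I unfolding Inv_def by auto
  moreover have "length (S P ?i) = length P" using \<open>shape (S P ?i) = shape P\<close>
    by (metis shape_len)
  ultimately show False using X.r_le brow_props(1)[OF assms(2)] by simp
qed

definition dfin :: "tab \<Rightarrow> nat" where "dfin P = (LEAST i. bJ (S P i) = {})"

lemma dfin_facts:
  assumes "is_HVT P" "0 < leg_excess P"
  shows "bJ (S P (dfin P)) = {}" "\<And>i. i < dfin P \<Longrightarrow> bJ (S P i) \<noteq> {}" "Inv P (dfin P)"
proof -
  obtain i where "bJ (S P i) = {}" using ex_new[OF assms] by blast
  then show "bJ (S P (dfin P)) = {}" unfolding dfin_def by (rule LeastI)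
  show nn: "\<And>i. i < dfin P \<Longrightarrow> bJ (S P i) \<noteq> {}" unfolding dfin_def using not_less_Least by blast
  show "Inv P (dfin P)" using Inv_all[OF assms] nn by blast
qed

lemma S_fix:
  assumes "S P (Suc m) = S P m"
  shows "S P (m + n) = S P m"
proof (induction n)
  case (Suc n)
  have "S P (m + Suc n) = Vb (S P (m + n))" by (simp add: S_Suc)
  also have "\<dots> = Vb (S P m)" using Suc by simp
  also have "\<dots> = S P m" using assms by (simp add: S_Suc)
  finally show ?case .
qed simp

lemma V_eq:
  assumes H: "is_HVT P" and E: "0 < leg_excess P"
  shows "V P = bump (S P (dfin P))"
proof -
  let ?d = "dfin P"
  have F: "bJ (S P ?d) = {}" "\<And>i. i < ?d \<Longrightarrow> bJ (S P i) \<noteq> {}" "Inv P ?d"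
    using dfin_facts[OF H E] by auto
  have shp: "\<And>i. i \<le> ?d \<Longrightarrow> shape (S P i) = shape P"
  proof -
    fix i assume "i \<le> ?d"
    then have "Inv P i" using Inv_all[OF H E] F(2) by auto
    then show "shape (S P i) = shape P" by (simp add: Inv_def)
  qed
  interpret X: bctx "S P ?d" using Inv_bctx[OF F(3) E] .
  have ex: "leg_excess (S P ?d) = leg_excess P" using F(3) by (simp add: Inv_def)
  have last: "S P (Suc ?d) = bump (S P ?d)" using S_Suc Vb_bump ex E by simp
  have shd: "shape (S P (Suc ?d)) \<noteq> shape P"
    using last X.shape_bump_new[OF F(1)] shp[of ?d] by simp
  have L: "(LEAST d. 1 \<le> d \<and> V_stop P d) = Suc ?d"
  proof (rule Least_equality)
    show "1 \<le> Suc ?d \<and> V_stop P (Suc ?d)" using shd by (simp add: V_stop_def S_def[symmetric] S_Suc)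
  next
    fix y assume y: "1 \<le> y \<and> V_stop P y"
    show "Suc ?d \<le> y"
    proof (rule ccontr)
      assume "\<not> Suc ?d \<le> y"
      then have yd: "y \<le> ?d" by simp
      have "shape (S P y) = shape P" using shp[OF yd] .
      then have fx: "S P y = S P (y - 1)" using y by (simp add: V_stop_def S_def)
      then have "S P (Suc (y - 1)) = S P (y - 1)" using y by simp
      then have "S P ((y - 1) + (Suc ?d - (y - 1))) = S P (y - 1)" by (rule S_fix)
      moreover have "(y - 1) + (Suc ?d - (y - 1)) = Suc ?d" using yd by simp
      ultimately have e: "S P (Suc ?d) = S P (y - 1)" by simp
      have "y - 1 \<le> ?d" using yd by simp
      then show False using shd shp e by metis
    qed
  qed
  show ?thesis unfolding V_def L using last by (simp add: S_def)
qed


lemma V_props: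
  assumes H: "is_HVT P" and E: "0 < leg_excess P"
  shows "is_HVT (V P)" "leg_excess (V P) + 1 = leg_excess P"
    "cells (V P) = insert (brow P + dfin P + 1, Suc (length (bR1 (S P (dfin P))))) (cells P)"
    "(brow P + dfin P + 1, Suc (length (bR1 (S P (dfin P))))) \<notin> cells P"
    "\<And>t. brow P < t \<Longrightarrow> cnt (V P) t = 0"
    "cnt (V P) (brow P) + 1 = cnt P (brow P)"
    "\<And>y. y \<in> rowlegs (V P) (brow P) \<Longrightarrow> y < bl P"
    "\<And>j. j \<le> dfin P \<Longrightarrow> bl (S P j) \<in> rowvals (V P) (brow P + j + 1)"
    "\<And>j. j < dfin P \<Longrightarrow> bl (S P j) < bl (S P (Suc j))"
proof -
  let ?d = "dfin P"
  let ?X = "S P ?d"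
  let ?r = "brow P"
  have F: "bJ ?X = {}" "Inv P ?d" using dfin_facts[OF H E] by auto
  have I1: "is_HVT ?X" "leg_excess ?X = leg_excess P" "shape ?X = shape P" "brow ?X = ?r + ?d"
    "\<And>t. ?r < t \<Longrightarrow> t < ?r + ?d \<Longrightarrow> cnt ?X t = 0"
    "0 < ?d \<Longrightarrow> cnt ?X (?r + ?d) = 1" "0 < ?d \<Longrightarrow> cnt ?X ?r + 1 = cnt P ?r"
    "0 < ?d \<Longrightarrow> \<forall>y \<in> rowlegs ?X ?r. y < bl P"
    "\<And>j. j < ?d \<Longrightarrow> bl (S P j) \<in> rowvals ?X (?r + j + 1)"
    "\<And>j. j < ?d \<Longrightarrow> bl (S P j) < bl (S P (Suc j))"
    using F(2) unfolding Inv_def by auto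
  interpret X: bctx ?X using Inv_bctx[OF F(2) E] .
  have VP: "V P = bump ?X" using V_eq[OF H E] .
  show "is_HVT (V P)" using X.bump_HVT VP by simp
  show "leg_excess (V P) + 1 = leg_excess P" using X.new_excess[OF F(1)] VP I1(2) by simp
  have cX: "cells ?X = cells P" using I1(3) by (simp add: cells_def)
  show "cells (V P) = insert (brow P + dfin P + 1, Suc (length (bR1 ?X))) (cells P)"
    using X.cells_bump_new(1)[OF F(1)] VP cX I1(4) by simp
  show "(brow P + dfin P + 1, Suc (length (bR1 ?X))) \<notin> cells P"
    using X.cells_bump_new(2)[OF F(1)] cX I1(4) by simp
  show "cnt (V P) t = 0" if t: "?r < t" for t
  proof -
    consider "t = Suc (brow ?X)" | "t = brow ?X" | "t \<noteq> brow ?X" "t \<noteq> Suc (brow ?X)" by blast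
    then show ?thesis
    proof cases
      case 1 then show ?thesis using X.cnt_bump_r1 F(1) VP by simp
    next
      case 2
      then have "0 < ?d" using t I1(4) by simp
      then show ?thesis using X.cnt_bump_r I1(4,6) 2 VP by simp
    next
      case 3
      have "cnt ?X t = 0"
      proof (cases "t < ?r + ?d")
        case True then show ?thesis using I1(5) t by simp
      next
        case False then show ?thesis using X.cnt_above 3 I1(4) by simp
      qed
      then show ?thesis using X.cnt_bump_other[OF 3] VP by simp
    qed
  qed
  show "cnt (V P) ?r + 1 = cnt P ?r"
  proof (cases "?d = 0")
    case True then show ?thesis using X.cnt_bump_r VP I1(4) by simp
  next
    case False
    then have "?r \<noteq> brow ?X" "?r \<noteq> Suc (brow ?X)" using I1(4) by simp_all
    then show ?thesis using X.cnt_bump_other VP I1(7) False by simp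
  qed
  show "y < bl P" if y: "y \<in> rowlegs (V P) ?r" for y
  proof (cases "?d = 0")
    case True then show ?thesis using X.rl_r y VP I1(4) by simp
  next
    case False
    have n1: "?r \<noteq> brow ?X" and n2: "?r \<noteq> Suc (brow ?X)" using I1(4) False by simp_all
    have "get_row (bump ?X) ?r = get_row ?X ?r" using X.row_bump_other[OF n1 n2] .
    then have "rowlegs (bump ?X) ?r = rowlegs ?X ?r" by (rule rowlegs_eq)
    then show ?thesis using I1(8) False y VP by simp
  qed
  show "bl (S P j) \<in> rowvals (V P) (?r + j + 1)" if j: "j \<le> ?d" for j
  proof (cases "j = ?d")
    case True
    have "bl ?X \<in> rowvals (bump ?X) (Suc (brow ?X))" using X.rv_r1 by auto
    then show ?thesis using True VP I1(4) by simp
  next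
    case False
    then have jd: "j < ?d" using j by simp
    have mem: "bl (S P j) \<in> rowvals ?X (?r + j + 1)" using I1(9)[OF jd] .
    have lt: "bl (S P j) < bl (S P (Suc j))" using I1(10)[OF jd] .
    show ?thesis
    proof (cases "Suc j = ?d")
      case True
      have eqr: "?r + j + 1 = brow ?X" using True I1(4) by simp
      have "bl (S P j) < bl ?X" using lt True by simp
      then have "bl (S P j) \<in> rowvals (bump ?X) (brow ?X)"
        using X.rv_r[of "bl (S P j)"] mem unfolding eqr by blast
      then show ?thesis using eqr VP by simp
    next
      case F2: False
      have n1: "?r + j + 1 \<noteq> brow ?X" and n2: "?r + j + 1 \<noteq> Suc (brow ?X)" using I1(4) jd F2 by simp_all
      have "get_row (bump ?X) (?r + j + 1) = get_row ?X (?r + j + 1)" using X.row_bump_other[OF n1 n2] .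
      then have "rowvals (bump ?X) (?r + j + 1) = rowvals ?X (?r + j + 1)" by (rule rowvals_eq)
      then show ?thesis using mem VP by simp
    qed
  qed
  show "bl (S P j) < bl (S P (Suc j))" if "j < ?d" for j using I1(10) that by simp
qed

lemma path2:
  assumes H: "is_HVT P" and E: "0 < leg_excess P"
    and E2: "0 < leg_excess (V P)" and B: "brow (V P) = brow P"
  shows "dfin P < dfin (V P)"
proof -
  let ?d = "dfin P"
  let ?r = "brow P"
  let ?P = "V P"
  have H2: "is_HVT ?P" using V_props(1)[OF H E] .
  have C: "i \<le> ?d \<Longrightarrow> (\<forall>i'<i. bJ (S ?P i') \<noteq> {}) \<and> bl (S ?P i) < bl (S P i)
           \<and> (\<forall>t. ?r + i < t \<longrightarrow> get_row (S ?P i) t = get_row ?P t)" for i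
  proof (induction i)
    case 0
    interpret Y: bctx ?P using H2 E2 by unfold_locales
    have "bl ?P \<in> rowlegs ?P ?r" using Y.bl_rowlegs(1) B by simp
    then have "bl ?P < bl P" using V_props(7)[OF H E] by blast
    then show ?case by simp
  next
    case (Suc i)
    then have IH: "\<forall>i'<i. bJ (S ?P i') \<noteq> {}" "bl (S ?P i) < bl (S P i)"
      "\<And>t. ?r + i < t \<Longrightarrow> get_row (S ?P i) t = get_row ?P t" and id: "i < ?d" by auto
    have Iv: "Inv ?P i" using Inv_all[OF H2 E2 IH(1)] .
    interpret X: bctx "S ?P i" using Inv_bctx[OF Iv E2] .
    have br: "brow (S ?P i) = ?r + i" using Iv B by (simp add: Inv_def)
    have ex: "leg_excess (S ?P i) = leg_excess ?P" using Iv by (simp add: Inv_def)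
    have w: "bl (S P i) \<in> rowvals ?P (?r + i + 1)" using V_props(8)[OF H E less_imp_le[OF id]] .
    have "get_row (S ?P i) (?r + i + 1) = get_row ?P (?r + i + 1)" using IH(3)[of "?r + i + 1"] by simp
    then have "rowvals (S ?P i) (?r + i + 1) = rowvals ?P (?r + i + 1)" by (rule rowvals_eq)
    then have w': "bl (S P i) \<in> rowvals (S ?P i) (Suc (brow (S ?P i)))" using w br by simp
    have nn: "bJ (S ?P i) \<noteq> {}" "bk (S ?P i) \<le> bl (S P i)" using X.k_bound[OF w' IH(2)] by auto
    have nn_all: "\<forall>i'<Suc i. bJ (S ?P i') \<noteq> {}" using IH(1) nn(1) less_Suc_eq by auto
    have SS: "S ?P (Suc i) = bump (S ?P i)" using S_Suc Vb_bump ex E2 by simp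
    have "bl (S ?P (Suc i)) = bk (S ?P i)" using SS X.old_bl[OF nn(1)] by simp
    also have "\<dots> \<le> bl (S P i)" using nn(2) .
    also have "\<dots> < bl (S P (Suc i))" using V_props(9)[OF H E id] .
    finally have blt: "bl (S ?P (Suc i)) < bl (S P (Suc i))" .
    have rows: "\<forall>t. ?r + Suc i < t \<longrightarrow> get_row (S ?P (Suc i)) t = get_row ?P t"
    proof (intro allI impI)
      fix t assume t: "?r + Suc i < t"
      have n1: "t \<noteq> brow (S ?P i)" and n2: "t \<noteq> Suc (brow (S ?P i))" using t br by simp_all
      have "get_row (S ?P (Suc i)) t = get_row (S ?P i) t" using SS X.row_bump_other[OF n1 n2] by simp
      also have "\<dots> = get_row ?P t" using IH(3) t by simp
      finally show "get_row (S ?P (Suc i)) t = get_row ?P t" .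
    qed
    show ?case using nn_all blt rows by blast
  qed
  have Cd: "(\<forall>i'<?d. bJ (S ?P i') \<noteq> {}) \<and> bl (S ?P ?d) < bl (S P ?d)
           \<and> (\<forall>t. ?r + ?d < t \<longrightarrow> get_row (S ?P ?d) t = get_row ?P t)" using C[OF order_refl] .
  have Iv: "Inv ?P ?d" using Inv_all[OF H2 E2] Cd by blast
  interpret X: bctx "S ?P ?d" using Inv_bctx[OF Iv E2] .
  have br: "brow (S ?P ?d) = ?r + ?d" using Iv B by (simp add: Inv_def)
  have w: "bl (S P ?d) \<in> rowvals ?P (?r + ?d + 1)" using V_props(8)[OF H E order_refl] .
  have "get_row (S ?P ?d) (?r + ?d + 1) = get_row ?P (?r + ?d + 1)" using Cd by simp
  then have "rowvals (S ?P ?d) (?r + ?d + 1) = rowvals ?P (?r + ?d + 1)" by (rule rowvals_eq)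
  then have w': "bl (S P ?d) \<in> rowvals (S ?P ?d) (Suc (brow (S ?P ?d)))" using w br by simp
  have nd: "bJ (S ?P ?d) \<noteq> {}" using X.k_bound(1)[OF w'] Cd by blast
  have all: "\<forall>i\<le>?d. bJ (S ?P i) \<noteq> {}" using Cd nd by (metis le_neq_implies_less)
  show ?thesis
  proof (rule ccontr)
    assume "\<not> ?thesis"
    then have "dfin ?P \<le> ?d" by simp
    then show False using all dfin_facts(1)[OF H2 E2] by blast
  qed
qed


abbreviation Pu :: "tab \<Rightarrow> nat \<Rightarrow> tab" where "Pu T i \<equiv> fst (uc T i)"
abbreviation Qu :: "tab \<Rightarrow> nat \<Rightarrow> nat \<Rightarrow> nat \<Rightarrow> nat" where "Qu T i \<equiv> snd (uc T i)"

definition newcell :: "tab \<Rightarrow> nat \<Rightarrow> nat \<times> nat" where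
  "newcell T i = (brow (Pu T i) + dfin (Pu T i) + 1, Suc (length (bR1 (S (Pu T i) (dfin (Pu T i))))))"

lemma Pu_Suc: "Pu T (Suc i) = V (Pu T i)" by (simp add: Let_def)

lemma Qu_Suc: "Qu T (Suc i) a b = (if (a, b) \<in> cells (Pu T (Suc i)) - cells (Pu T i)
     then a - brow (Pu T i) else Qu T i a b)"
  by (simp add: Let_def brow_def)

declare uc.simps(2)[simp del]

lemma V_stop_ex:
  assumes H: "is_HVT P" and E: "0 < leg_excess P"
  shows "V_stop P (Suc (dfin P))"
proof -
  have F: "Inv P (dfin P)" using dfin_facts[OF H E] by auto
  have ex: "leg_excess (S P (dfin P)) = leg_excess P" using F by (simp add: Inv_def)
  have "(Vb ^^ Suc (dfin P)) P = V P"
    using V_eq[OF H E] Vb_bump[of "S P (dfin P)"] ex E by (simp add: S_def)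
  moreover have "shape (V P) \<noteq> shape P"
  proof
    assume "shape (V P) = shape P"
    then have "cells (V P) = cells P" by (simp add: cells_def)
    then show False using V_props(3,4)[OF H E] by blast
  qed
  ultimately show ?thesis by (simp add: V_stop_def)
qed

lemma step:
  assumes H: "is_HVT (Pu T i)" and E: "0 < leg_excess (Pu T i)"
  shows "is_HVT (Pu T (Suc i))" "leg_excess (Pu T (Suc i)) + 1 = leg_excess (Pu T i)"
    "cells (Pu T (Suc i)) = insert (newcell T i) (cells (Pu T i))"
    "newcell T i \<notin> cells (Pu T i)"
    "2 \<le> fst (newcell T i)"
    "brow (Pu T i) < fst (newcell T i)"
  using V_props(1-4)[OF H E] Pu_Suc[of T i] brow_props(1)[OF E] by (auto simp: newcell_def)

lemma main_inv:
  assumes H: "is_HVT T"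
  shows "i \<le> leg_excess T \<Longrightarrow> is_HVT (Pu T i) \<and> leg_excess (Pu T i) + i = leg_excess T
     \<and> cells T \<subseteq> cells (Pu T i)
     \<and> (\<forall>x \<in> cells (Pu T i) - cells T. 2 \<le> fst x \<and>
          (\<exists>j<i. x = newcell T j \<and> Qu T i (fst x) (snd x) = fst x - brow (Pu T j)))"
proof (induction i)
  case 0
  then show ?case using H by simp
next
  case (Suc i)
  then have IH: "is_HVT (Pu T i)" "leg_excess (Pu T i) + i = leg_excess T" "cells T \<subseteq> cells (Pu T i)"
    "\<And>x. x \<in> cells (Pu T i) - cells T \<Longrightarrow> 2 \<le> fst x \<and>
          (\<exists>j<i. x = newcell T j \<and> Qu T i (fst x) (snd x) = fst x - brow (Pu T j))"
    and iE: "Suc i \<le> leg_excess T" by auto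
  have E: "0 < leg_excess (Pu T i)" using IH(2) iE by simp
  note st = step[OF IH(1) E]
  have q: "\<forall>x \<in> cells (Pu T (Suc i)) - cells T. 2 \<le> fst x \<and>
          (\<exists>j<Suc i. x = newcell T j \<and> Qu T (Suc i) (fst x) (snd x) = fst x - brow (Pu T j))"
  proof
    fix x assume x: "x \<in> cells (Pu T (Suc i)) - cells T"
    show "2 \<le> fst x \<and> (\<exists>j<Suc i. x = newcell T j \<and> Qu T (Suc i) (fst x) (snd x) = fst x - brow (Pu T j))"
    proof (cases "x = newcell T i")
      case True
      have "Qu T (Suc i) (fst x) (snd x) = fst x - brow (Pu T i)"
        using Qu_Suc[of T i "fst x" "snd x"] st(3,4) True by simp
      then show ?thesis using True st(5) by auto
    next
      case False
      then have xo: "x \<in> cells (Pu T i) - cells T" using x st(3) by auto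
      then have "x \<in> cells (Pu T i)" by simp
      then have "Qu T (Suc i) (fst x) (snd x) = Qu T i (fst x) (snd x)"
        using Qu_Suc[of T i "fst x" "snd x"] by simp
      then show ?thesis using IH(4)[OF xo] less_SucI by metis
    qed
  qed
  show ?case using st IH(2,3) q by auto
qed

lemma cells_mono:
  assumes H: "is_HVT T" and jk: "j \<le> k" "k \<le> leg_excess T"
  shows "cells (Pu T j) \<subseteq> cells (Pu T k)"
  using jk
proof (induction k)
  case 0 then show ?case by simp
next
  case (Suc k)
  show ?case
  proof (cases "j = Suc k")
    case True then show ?thesis by simp
  next
    case False
    then have jk': "j \<le> k" using Suc by simp
    have I: "is_HVT (Pu T k)" "leg_excess (Pu T k) + k = leg_excess T" using main_inv[OF H, of k] Suc by auto
    have E: "0 < leg_excess (Pu T k)" using I(2) Suc by simp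
    have "cells (Pu T k) \<subseteq> cells (Pu T (Suc k))" using step(3)[OF I(1) E] by auto
    then show ?thesis using Suc jk' by auto
  qed
qed

lemma newcell_step:
  assumes H: "is_HVT T" and j: "j < leg_excess T" and k: "k \<le> leg_excess T"
  shows "newcell T j \<in> cells (Pu T k) \<longleftrightarrow> j < k"
proof -
  have I: "is_HVT (Pu T j)" "leg_excess (Pu T j) + j = leg_excess T" using main_inv[OF H, of j] j by auto
  have E: "0 < leg_excess (Pu T j)" using I(2) j by simp
  note st = step[OF I(1) E]
  show ?thesis
  proof
    assume a: "newcell T j \<in> cells (Pu T k)"
    show "j < k"
    proof (rule ccontr)
      assume "\<not> j < k"
      then have "cells (Pu T k) \<subseteq> cells (Pu T j)" using cells_mono[OF H, of k j] j by simp
      then show False using a st(4) by blast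
    qed
  next
    assume "j < k"
    then have "cells (Pu T (Suc j)) \<subseteq> cells (Pu T k)" using cells_mono[OF H, of "Suc j" k] k by simp
    then show "newcell T j \<in> cells (Pu T k)" using st(3) by blast
  qed
qed

lemma brow_step:
  assumes H: "is_HVT T" and j: "Suc j < leg_excess T"
  shows "brow (Pu T (Suc j)) \<le> brow (Pu T j)"
proof -
  have I: "is_HVT (Pu T j)" "leg_excess (Pu T j) + j = leg_excess T" using main_inv[OF H, of j] j by auto
  have E: "0 < leg_excess (Pu T j)" using I(2) j by simp
  have I2: "leg_excess (Pu T (Suc j)) + Suc j = leg_excess T" using main_inv[OF H, of "Suc j"] j by auto
  have E2: "0 < leg_excess (Pu T (Suc j))" using I2 j by simp
  have "0 < cnt (Pu T (Suc j)) (brow (Pu T (Suc j)))" using brow_props(3)[OF E2] .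
  then show ?thesis using V_props(5)[OF I(1) E] Pu_Suc[of T j] by (metis not_le less_irrefl)
qed

lemma brow_mono:
  assumes H: "is_HVT T" and jk: "j \<le> k" "k < leg_excess T"
  shows "brow (Pu T k) \<le> brow (Pu T j)"
  using jk
proof (induction k)
  case 0 then show ?case by simp
next
  case (Suc k)
  show ?case
  proof (cases "j = Suc k")
    case True then show ?thesis by simp
  next
    case False
    then have "j \<le> k" using Suc by simp
    then have "brow (Pu T k) \<le> brow (Pu T j)" using Suc by simp
    moreover have "brow (Pu T (Suc k)) \<le> brow (Pu T k)" using brow_step[OF H] Suc by simp
    ultimately show ?thesis by simp
  qed
qed

lemma nr_step:
  assumes H: "is_HVT T" and j: "Suc j < leg_excess T" and b: "brow (Pu T (Suc j)) = brow (Pu T j)"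
  shows "fst (newcell T j) < fst (newcell T (Suc j))"
proof -
  have I: "is_HVT (Pu T j)" "leg_excess (Pu T j) + j = leg_excess T" using main_inv[OF H, of j] j by auto
  have E: "0 < leg_excess (Pu T j)" using I(2) j by simp
  have I2: "leg_excess (Pu T (Suc j)) + Suc j = leg_excess T" using main_inv[OF H, of "Suc j"] j by auto
  have E2: "0 < leg_excess (Pu T (Suc j))" using I2 j by simp
  have "dfin (Pu T j) < dfin (V (Pu T j))"
    using path2[OF I(1) E] E2 b Pu_Suc[of T j] by simp
  then show ?thesis using b Pu_Suc[of T j] by (simp add: newcell_def)
qed

lemma nr_strict:
  assumes H: "is_HVT T" and jk: "j < k" "k < leg_excess T" and b: "brow (Pu T k) = brow (Pu T j)"
  shows "fst (newcell T j) < fst (newcell T k)"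
  using jk b
proof (induction k)
  case 0 then show ?case by simp
next
  case (Suc k)
  have m1: "brow (Pu T (Suc k)) \<le> brow (Pu T k)" using brow_step[OF H Suc.prems(2)] .
  have m2: "brow (Pu T k) \<le> brow (Pu T j)" using brow_mono[OF H, of j k] Suc.prems(1,2) by simp
  have eq: "brow (Pu T (Suc k)) = brow (Pu T k)" using m1 m2 Suc.prems(3) by simp
  have st: "fst (newcell T k) < fst (newcell T (Suc k))" using nr_step[OF H _ eq] Suc by simp
  show ?case
  proof (cases "j = k")
    case True then show ?thesis using st by simp
  next
    case False
    then have "fst (newcell T j) < fst (newcell T k)" using Suc eq m1 m2 by simp
    then show ?thesis using st by simp
  qed
qed


lemma first_part_nth: "p \<noteq> [] \<Longrightarrow> first_part p = p ! 0"
  by (cases p) (auto simp: first_part_def)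

lemma part_cells_row1: "p \<noteq> [] \<Longrightarrow> (1, j) \<in> part_cells p \<longleftrightarrow> 1 \<le> j \<and> j \<le> p ! 0"
  by (cases p) (auto simp: part_cells_def)

lemma skew_info:
  assumes H: "is_HVT T" and x: "x \<in> cells (Pu T (leg_excess T)) - cells T"
  shows "\<exists>j<leg_excess T. x = newcell T j \<and> Qu T (leg_excess T) (fst x) (snd x) = fst x - brow (Pu T j)
          \<and> brow (Pu T j) < fst x \<and> 1 \<le> brow (Pu T j)"
proof -
  obtain j where j: "j < leg_excess T" "x = newcell T j"
    "Qu T (leg_excess T) (fst x) (snd x) = fst x - brow (Pu T j)"
    using main_inv[OF H order_refl] x by blast
  have I: "is_HVT (Pu T j)" "leg_excess (Pu T j) + j = leg_excess T" using main_inv[OF H, of j] j by auto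
  have E: "0 < leg_excess (Pu T j)" using I(2) j by simp
  show ?thesis using j step(6)[OF I(1) E] brow_props(1)[OF E] by auto
qed

lemma earlier:
  assumes H: "is_HVT T" and j': "j' < leg_excess T" and y: "y \<in> cells (Pu T (Suc j'))"
    and ne: "y \<noteq> newcell T j'" and yn: "y = newcell T j" and j: "j < leg_excess T"
  shows "j < j'"
proof -
  have I: "is_HVT (Pu T j')" "leg_excess (Pu T j') + j' = leg_excess T" using main_inv[OF H, of j'] j' by auto
  have E: "0 < leg_excess (Pu T j')" using I(2) j' by simp
  have "y \<in> cells (Pu T j')" using step(3)[OF I(1) E] y ne by auto
  then show ?thesis using newcell_step[OF H j, of j'] j' yn by simp
qed

theorem proposition3p37:
  fixes la :: "nat list" and T :: tab
  assumes "is_partition la"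
      and "is_HVT T"
      and "shape T = la"
  shows "(\<forall>i < leg_excess T.
            (\<exists>d \<ge> 1. V_stop (fst (uc T i)) d)
          \<and> cells (fst (uc T i)) \<subseteq> cells (fst (uc T (Suc i)))
          \<and> card (cells (fst (uc T (Suc i))) - cells (fst (uc T i))) = 1)
       \<and> (\<exists>mu. is_MVT (UP T) \<and> shape (UP T) = mu \<and> part_cells la \<subseteq> part_cells mu
              \<and> flagged_increasing (UQ T) la mu)"
proof -
  note H = assms(2)
  let ?a = "leg_excess T"
  have part1: "\<forall>i < ?a. (\<exists>d \<ge> 1. V_stop (Pu T i) d) \<and> cells (Pu T i) \<subseteq> cells (Pu T (Suc i))
          \<and> card (cells (Pu T (Suc i)) - cells (Pu T i)) = 1"
  proof (intro allI impI)
    fix i assume i: "i < ?a"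
    have I: "is_HVT (Pu T i)" "leg_excess (Pu T i) + i = ?a" using main_inv[OF H, of i] i by auto
    have E: "0 < leg_excess (Pu T i)" using I(2) i by simp
    note st = step[OF I(1) E]
    have "V_stop (Pu T i) (Suc (dfin (Pu T i)))" using V_stop_ex[OF I(1) E] .
    then have "\<exists>d \<ge> 1. V_stop (Pu T i) d" by (intro exI[of _ "Suc (dfin (Pu T i))"]) simp
    moreover have "cells (Pu T (Suc i)) - cells (Pu T i) = {newcell T i}" using st(3,4) by auto
    ultimately show "(\<exists>d \<ge> 1. V_stop (Pu T i) d) \<and> cells (Pu T i) \<subseteq> cells (Pu T (Suc i))
          \<and> card (cells (Pu T (Suc i)) - cells (Pu T i)) = 1" using st(3) by auto
  qed
  have IA: "is_HVT (Pu T ?a)" "leg_excess (Pu T ?a) = 0" "cells T \<subseteq> cells (Pu T ?a)"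
    "\<And>x. x \<in> cells (Pu T ?a) - cells T \<Longrightarrow> 2 \<le> fst x"
    using main_inv[OF H order_refl] by auto
  let ?mu = "shape (UP T)"
  have UP: "UP T = Pu T ?a" by (simp add: UP_def)
  have UQ: "UQ T = Qu T ?a" by (simp add: UQ_def)
  have pc: "part_cells la = cells T" using assms(3) by (simp add: cells_def)
  have pm: "part_cells ?mu = cells (Pu T ?a)" using UP by (simp add: cells_def)
  have mvt: "is_MVT (UP T)" using IA(1,2) UP by (simp add: is_MVT_def)
  have sub: "part_cells la \<subseteq> part_cells ?mu" using pc pm IA(3) by simp
  have pmu: "is_partition ?mu" using IA(1) UP by (simp add: is_HVT_def)
  have fp: "first_part la = first_part ?mu"
  proof (cases "la = []")
    case True
    then have "T = []" using assms(3) by (simp add: shape_def)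
    then have "?a = 0" by (simp add: leg_excess_def)
    then have "UP T = T" using UP by simp
    then show ?thesis using assms(3) by simp
  next
    case False
    have a0: "0 < la ! 0" using is_partition_pos[OF assms(1)] False by simp
    have "(1,1) \<in> part_cells la" using part_cells_row1[OF False] a0 by simp
    then have "(1,1) \<in> part_cells ?mu" using sub by blast
    then have mne: "?mu \<noteq> []" by (auto simp: part_cells_def)
    have eqv: "(1,j) \<in> part_cells ?mu \<longleftrightarrow> (1,j) \<in> part_cells la" for j
      using sub IA(4)[of "(1,j)"] pc pm by auto
    have "la ! 0 \<le> ?mu ! 0" using eqv[of "la ! 0"] part_cells_row1[OF False] part_cells_row1[OF mne] a0 by simp
    moreover have "?mu ! 0 \<le> la ! 0"
      using eqv[of "?mu ! 0"] part_cells_row1[OF False] part_cells_row1[OF mne]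
        is_partition_pos[OF pmu, of 0] mne by simp
    ultimately show ?thesis using first_part_nth[OF False] first_part_nth[OF mne] by simp
  qed
  have skew: "part_cells ?mu - part_cells la = cells (Pu T ?a) - cells T" using pc pm by simp
  have vals: "\<forall>(r,c) \<in> part_cells ?mu - part_cells la. 0 < UQ T r c \<and> UQ T r c \<le> r - 1"
  proof
    fix x assume "x \<in> part_cells ?mu - part_cells la"
    then have x: "x \<in> cells (Pu T ?a) - cells T" using skew by simp
    obtain j where j: "Qu T ?a (fst x) (snd x) = fst x - brow (Pu T j)" "brow (Pu T j) < fst x" "1 \<le> brow (Pu T j)"
      using skew_info[OF H x] by blast
    show "case x of (r, c) \<Rightarrow> 0 < UQ T r c \<and> UQ T r c \<le> r - 1" using j UQ by (cases x) auto
  qed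
  have rows: "\<forall>r c c'. (r,c) \<in> part_cells ?mu - part_cells la \<longrightarrow> (r,c') \<in> part_cells ?mu - part_cells la
            \<longrightarrow> c < c' \<longrightarrow> UQ T r c < UQ T r c'"
  proof (intro allI impI)
    fix r c c' assume x1: "(r,c) \<in> part_cells ?mu - part_cells la" and x2: "(r,c') \<in> part_cells ?mu - part_cells la"
      and cc: "c < c'"
    have y1: "(r,c) \<in> cells (Pu T ?a) - cells T" and y2: "(r,c') \<in> cells (Pu T ?a) - cells T" using x1 x2 skew by auto
    obtain j where j: "j < ?a" "(r,c) = newcell T j" "Qu T ?a r c = r - brow (Pu T j)" "brow (Pu T j) < r"
      using skew_info[OF H y1] by auto
    obtain j' where j': "j' < ?a" "(r,c') = newcell T j'" "Qu T ?a r c' = r - brow (Pu T j')" "brow (Pu T j') < r"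
      using skew_info[OF H y2] by auto
    have Ij: "is_HVT (Pu T j')" "leg_excess (Pu T j') + j' = ?a" using main_inv[OF H, of j'] j'(1) by auto
    have Ej: "0 < leg_excess (Pu T j')" using Ij(2) j'(1) by simp
    have "(r,c') \<in> cells (Pu T (Suc j'))" using step(3)[OF Ij(1) Ej] j'(2) by simp
    moreover have "1 \<le> c" using y1 by (simp add: in_cells)
    ultimately have "(r,c) \<in> cells (Pu T (Suc j'))" using cells_row_left cc by (meson less_imp_le)
    moreover have "(r,c) \<noteq> newcell T j'" using j'(2)[symmetric] cc by auto
    ultimately have jj: "j < j'" using earlier[OF H j'(1) _ _ j(2) j(1)] by blast
    have le: "brow (Pu T j') \<le> brow (Pu T j)" using brow_mono[OF H, of j j'] jj j'(1) by simp
    have "brow (Pu T j') \<noteq> brow (Pu T j)"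
    proof
      assume "brow (Pu T j') = brow (Pu T j)"
      then have "fst (newcell T j) < fst (newcell T j')" using nr_strict[OF H jj j'(1)] by simp
      then show False using j(2) j'(2) by (metis fst_conv less_irrefl)
    qed
    then have "brow (Pu T j') < brow (Pu T j)" using le by simp
    then show "UQ T r c < UQ T r c'" using UQ j(3,4) j'(3) by simp
  qed
  have cols: "\<forall>r r' c. (r,c) \<in> part_cells ?mu - part_cells la \<longrightarrow> (r',c) \<in> part_cells ?mu - part_cells la
            \<longrightarrow> r < r' \<longrightarrow> UQ T r c < UQ T r' c"
  proof (intro allI impI)
    fix r r' c assume x1: "(r,c) \<in> part_cells ?mu - part_cells la" and x2: "(r',c) \<in> part_cells ?mu - part_cells la"
      and rr: "r < r'"
    have y1: "(r,c) \<in> cells (Pu T ?a) - cells T" and y2: "(r',c) \<in> cells (Pu T ?a) - cells T" using x1 x2 skew by auto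
    obtain j where j: "j < ?a" "(r,c) = newcell T j" "Qu T ?a r c = r - brow (Pu T j)" "brow (Pu T j) < r"
      using skew_info[OF H y1] by auto
    obtain j' where j': "j' < ?a" "(r',c) = newcell T j'" "Qu T ?a r' c = r' - brow (Pu T j')" "brow (Pu T j') < r'"
      using skew_info[OF H y2] by auto
    have Ij: "is_HVT (Pu T j')" "leg_excess (Pu T j') + j' = ?a" using main_inv[OF H, of j'] j'(1) by auto
    have Ej: "0 < leg_excess (Pu T j')" using Ij(2) j'(1) by simp
    note st = step[OF Ij(1) Ej]
    have "(r',c) \<in> cells (Pu T (Suc j'))" using st(3) j'(2) by simp
    moreover have "1 \<le> r" using y1 by (simp add: in_cells)
    moreover have "is_partition (shape (Pu T (Suc j')))" using st(1) by (simp add: is_HVT_def)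
    ultimately have "(r,c) \<in> cells (Pu T (Suc j'))" using cells_col_down rr by (meson less_imp_le)
    moreover have "(r,c) \<noteq> newcell T j'" using j'(2)[symmetric] rr by auto
    ultimately have jj: "j < j'" using earlier[OF H j'(1) _ _ j(2) j(1)] by blast
    have le: "brow (Pu T j') \<le> brow (Pu T j)" using brow_mono[OF H, of j j'] jj j'(1) by simp
    then show "UQ T r c < UQ T r' c" using UQ j(3,4) j'(3) rr by simp
  qed
  have fl: "flagged_increasing (UQ T) la ?mu"
    unfolding flagged_increasing_def using assms(1) pmu sub fp vals rows cols by blast
  show ?thesis using part1 mvt sub fl by blast
qed


end
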